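(* Let $\Lambda$ be a finite connected graph with positive edge weights $J_{xy}$. Suppose the ferromagnetic spin-$1/2$ Heisenberg Hamiltonian $H=\sum_{x\sim y\in\Lambda}J_{xy}\big(\tfrac14\mathbb 1-\vec S_x\cdot\vec S_y\big)$ on $(\mathbb C^2)^{\otimes|\Lambda|}$ has the FOEL property. Then for the symmetric simple exclusion process on $\Lambda$ with jump rates $J_{xy}/2$ one has $\lambda(n)=\lambda(1)$ for all $1\le n\le|\Lambda|-1$.
   Context: $S^i_x$ are spin-$1/2$ matrices on site $x$. FOEL: with $\mathcal H^{(S)}$ the eigenspace of total spin $S$ (Casimir eigenvalue $S(S+1)$) and $E(H,S)=\min\operatorname{spec}(H|_{\mathcal H^{(S)}})$, one has $E(H,S)<E(H,S')$ whenever $S'<S$. The SSEP with jump rates $c_{xy}>0$ on $\Lambda$ has generator $L$ acting on functions $f$ on $\Omega_\Lambda=\{0,1\}^\Lambda$ by $(Lf)(\eta)=\sum_{x\sim y}c_{xy}(f(\eta)-f(\eta^{xy}))$, where $\eta^{xy}$ is $\eta$ with the values at $x$ and $y$ interchanged. $L$ leaves invariant each space of functions supported on $n$-particle configurations ($\sum_x\eta(x)=n$), is nonnegative, and $0$ is a simple eigenvalue on each such space; $\lambda(n)$ denotes the smallest positive eigenvalue of $L$ restricted to the $n$-particle space. *)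

theory Defs
  imports Complex_Main
begin

text \<open>Sites are the elements of a finite type 'v (the graph Lambda).  A basis
configuration of (C^2)^{tensor |Lambda|} is a map 'v => bool (True = spin up,
False = spin down); a state vector is a function from configurations to complex.
The same configurations serve as the SSEP configuration space {0,1}^Lambda.\<close>

type_synonym 'v state = "('v \<Rightarrow> bool) \<Rightarrow> complex"

text \<open>Spin-1/2 matrices S^i = sigma^i / 2 (i = 1,2,3), entries indexed by
(row, column), True = up.\<close>
definition spin_mat :: "nat \<Rightarrow> bool \<Rightarrow> bool \<Rightarrow> complex" where
  "spin_mat i a b =
     (if i = 1 then (if a \<noteq> b then 1/2 else 0)
      else if i = 2 then (if a = b then 0 else if a then - \<i>/2 else \<i>/2)
      else if i = 3 then (if a = b then (if a then 1/2 else -1/2) else 0)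
      else 0)"

definition site_spin :: "nat \<Rightarrow> 'v \<Rightarrow> 'v state \<Rightarrow> 'v state" where
  "site_spin i x \<psi> = (\<lambda>\<eta>. \<Sum>b\<in>UNIV. spin_mat i (\<eta> x) b * \<psi> (\<eta>(x := b)))"

definition total_spin :: "nat \<Rightarrow> ('v::finite) state \<Rightarrow> 'v state" where
  "total_spin i \<psi> = (\<lambda>\<eta>. \<Sum>x\<in>UNIV. site_spin i x \<psi> \<eta>)"

definition casimir :: "('v::finite) state \<Rightarrow> 'v state" where
  "casimir \<psi> = (\<lambda>\<eta>. \<Sum>i\<in>{1,2,3}. total_spin i (total_spin i \<psi>) \<eta>)"

text \<open>H = sum over edges {x,y} of J_xy (1/4 - S_x . S_y).  With J symmetric and
J x x = 0 the sum over unordered edges is half of the double sum.\<close>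
definition heis_ham :: "('v::finite \<Rightarrow> 'v \<Rightarrow> real) \<Rightarrow> 'v state \<Rightarrow> 'v state" where
  "heis_ham J \<psi> = (\<lambda>\<eta>. (1/2) * (\<Sum>x\<in>UNIV. \<Sum>y\<in>UNIV. complex_of_real (J x y) *
        (\<psi> \<eta> / 4 - (\<Sum>i\<in>{1,2,3}. site_spin i x (site_spin i y \<psi>) \<eta>))))"

definition spin_space :: "real \<Rightarrow> ('v::finite) state set" where
  "spin_space S = {\<psi>. casimir \<psi> = (\<lambda>\<eta>. complex_of_real (S * (S + 1)) * \<psi> \<eta>)}"

definition min_energy :: "(('v::finite) state \<Rightarrow> 'v state) \<Rightarrow> real \<Rightarrow> real" where
  "min_energy H S = Min {E. \<exists>\<psi>\<in>spin_space S. \<psi> \<noteq> (\<lambda>_. 0) \<and> H \<psi> = (\<lambda>\<eta>. complex_of_real E * \<psi> \<eta>)}"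

definition FOEL :: "(('v::finite) state \<Rightarrow> 'v state) \<Rightarrow> bool" where
  "FOEL H \<longleftrightarrow> (\<forall>S S' :: real. 0 \<le> S' \<longrightarrow> S' < S \<longrightarrow>
      (spin_space S :: 'v state set) \<noteq> {\<lambda>_. 0} \<longrightarrow> (spin_space S' :: 'v state set) \<noteq> {\<lambda>_. 0} \<longrightarrow>
      min_energy H S < min_energy H S')"

definition swap_cfg :: "('v \<Rightarrow> bool) \<Rightarrow> 'v \<Rightarrow> 'v \<Rightarrow> ('v \<Rightarrow> bool)" where
  "swap_cfg \<eta> x y = \<eta>(x := \<eta> y, y := \<eta> x)"

text \<open>(Lf)(eta) = sum over edges {x,y} c_xy (f eta - f eta^{xy}); again half of
the double sum for symmetric c with vanishing diagonal.\<close>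
definition ssep_gen :: "('v::finite \<Rightarrow> 'v \<Rightarrow> real) \<Rightarrow> (('v \<Rightarrow> bool) \<Rightarrow> real) \<Rightarrow> (('v \<Rightarrow> bool) \<Rightarrow> real)" where
  "ssep_gen c f = (\<lambda>\<eta>. (1/2) * (\<Sum>x\<in>UNIV. \<Sum>y\<in>UNIV. c x y * (f \<eta> - f (swap_cfg \<eta> x y))))"

definition n_particle_space :: "nat \<Rightarrow> (('v::finite \<Rightarrow> bool) \<Rightarrow> real) set" where
  "n_particle_space n = {f. \<forall>\<eta>. f \<eta> \<noteq> 0 \<longrightarrow> card {x. \<eta> x} = n}"

definition ssep_gap :: "('v::finite \<Rightarrow> 'v \<Rightarrow> real) \<Rightarrow> nat \<Rightarrow> real" where
  "ssep_gap c n = Min {l. 0 < l \<and> (\<exists>f\<in>n_particle_space n. f \<noteq> (\<lambda>_. 0) \<and> ssep_gen c f = (\<lambda>\<eta>. l * f \<eta>))}"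

end

theory Submission imports Defs "HOL-Analysis.Analysis" begin

lemma UNIV_bool': "(UNIV::bool set) = {True, False}" by auto

lemma site_perm:
  "(\<Sum>i\<in>{1,2,3::nat}. site_spin i x (site_spin i y \<psi>) \<eta>) =
    (2 * \<psi> (swap_cfg \<eta> x y) - \<psi> \<eta>) / 4 + (if x = y then \<psi> \<eta> / 2 else 0)"
proof (cases "x = y")
  case True
  then show ?thesis
    by (cases "\<eta> x") (simp_all add: site_spin_def spin_mat_def UNIV_bool' swap_cfg_def field_simps fun_upd_idem)
next
  case False
  then show ?thesis
    by (cases "\<eta> x"; cases "\<eta> y") (simp_all add: site_spin_def spin_mat_def UNIV_bool' swap_cfg_def field_simps fun_upd_twist fun_upd_idem)
qed

definition sgn_b :: "bool \<Rightarrow> complex" where "sgn_b b = (if b then 1/2 else -1/2)"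

definition upo :: "'v \<Rightarrow> ('v::finite) state \<Rightarrow> 'v state" where
  "upo y \<psi> = (\<lambda>\<eta>. if \<eta> y then \<psi> (\<eta>(y:=False)) else 0)"
definition dno :: "'v \<Rightarrow> ('v::finite) state \<Rightarrow> 'v state" where
  "dno y \<psi> = (\<lambda>\<eta>. if \<eta> y then 0 else \<psi> (\<eta>(y:=True)))"

lemma site_ladder:
  "(\<Sum>i\<in>{1,2,3::nat}. site_spin i x (site_spin i y \<psi>) \<eta>) =
    (dno x (upo y \<psi>) \<eta> + upo x (dno y \<psi>) \<eta>) / 2
    + sgn_b (\<eta> x) * sgn_b (\<eta> y) * \<psi> \<eta>"
proof (cases "x = y")
  case True
  then show ?thesis
    by (cases "\<eta> x") (simp_all add: upo_def dno_def sgn_b_def site_spin_def spin_mat_def UNIV_bool' field_simps fun_upd_idem)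
next
  case False
  then show ?thesis
    by (cases "\<eta> x"; cases "\<eta> y") (simp_all add: upo_def dno_def sgn_b_def site_spin_def spin_mat_def UNIV_bool' field_simps fun_upd_twist fun_upd_idem)
qed

lemma site_spin_sum:
  "site_spin i x (\<lambda>\<eta>'. \<Sum>y\<in>A. f y \<eta>') \<eta> = (\<Sum>y\<in>A. site_spin i x (f y) \<eta>)"
  unfolding site_spin_def by (simp add: sum_distrib_left sum.swap[of _ UNIV])

lemma casimir_expand:
  "casimir \<psi> \<eta> = (\<Sum>x\<in>UNIV. \<Sum>y\<in>UNIV. \<Sum>i\<in>{1,2,3::nat}. site_spin i x (site_spin i y \<psi>) \<eta>)"
proof -
  have "casimir \<psi> \<eta> = (\<Sum>i\<in>{1,2,3::nat}. \<Sum>x\<in>UNIV. \<Sum>y\<in>UNIV. site_spin i x (site_spin i y \<psi>) \<eta>)"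
    unfolding casimir_def total_spin_def
    by (simp only: site_spin_sum)
  also have "\<dots> = (\<Sum>x\<in>UNIV. \<Sum>y\<in>UNIV. \<Sum>i\<in>{1,2,3::nat}. site_spin i x (site_spin i y \<psi>) \<eta>)"
    by (subst sum.swap, intro sum.cong refl, rule sum.swap)
  finally show ?thesis .
qed

definition Pop :: "real \<Rightarrow> ('v::finite \<Rightarrow> 'v \<Rightarrow> real) \<Rightarrow> 'v state \<Rightarrow> 'v state" where
  "Pop a b \<psi> = (\<lambda>\<eta>. complex_of_real a * \<psi> \<eta> +
      (\<Sum>x\<in>UNIV. \<Sum>y\<in>UNIV. complex_of_real (b x y) * \<psi> (swap_cfg \<eta> x y)))"

definition cas0 :: "real \<Rightarrow> real" where "cas0 N = N/2 - N^2/4"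

lemma sum_if_eq_const: "(\<Sum>x\<in>(UNIV::'v::finite set). \<Sum>y\<in>UNIV. if x = y then c else 0) = of_nat CARD('v) * (c::complex)"
  by simp

lemma casimir_Pop:
  "casimir \<psi> = Pop (cas0 (real CARD('v::finite))) (\<lambda>_ _. 1/2) (\<psi> :: 'v state)"
proof
  fix \<eta>
  have "casimir \<psi> \<eta> = (\<Sum>x\<in>UNIV. \<Sum>y\<in>UNIV. (1/2) * \<psi> (swap_cfg \<eta> x y)
      + (- \<psi> \<eta> / 4) + (if x = y then \<psi> \<eta> / 2 else 0))"
    unfolding casimir_expand site_perm by (simp add: field_simps)
  also have "\<dots> = (\<Sum>x\<in>UNIV. \<Sum>y\<in>UNIV. (1/2) * \<psi> (swap_cfg \<eta> x y))
      + of_nat CARD('v) * of_nat CARD('v) * (- \<psi> \<eta> / 4) + of_nat CARD('v) * (\<psi> \<eta> / 2)"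
    by (simp only: sum.distrib) simp
  also have "\<dots> = Pop (cas0 (real CARD('v))) (\<lambda>_ _. 1/2) \<psi> \<eta>"
    by (simp add: Pop_def cas0_def field_simps power2_eq_square)
  finally show "casimir \<psi> \<eta> = Pop (cas0 (real CARD('v))) (\<lambda>_ _. 1/2) \<psi> \<eta>" .
qed

lemma heis_Pop:
  assumes "\<forall>x. J x x = 0"
  shows "heis_ham J \<psi> = Pop (\<Sum>x\<in>UNIV. \<Sum>y\<in>UNIV. J x y / 4) (\<lambda>x y. - J x y / 4) \<psi>"
proof
  fix \<eta>
  have "heis_ham J \<psi> \<eta> = (\<Sum>x\<in>UNIV. \<Sum>y\<in>UNIV. complex_of_real (J x y / 4) * \<psi> \<eta>
     + complex_of_real (- J x y / 4) * \<psi> (swap_cfg \<eta> x y))"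
    unfolding heis_ham_def site_perm sum_distrib_left
    by (intro sum.cong refl) (use assms in \<open>auto simp: field_simps\<close>)
  also have "\<dots> = (\<Sum>x\<in>UNIV. \<Sum>y\<in>UNIV. complex_of_real (J x y / 4) * \<psi> \<eta>)
     + (\<Sum>x\<in>UNIV. \<Sum>y\<in>UNIV. complex_of_real (- J x y / 4) * \<psi> (swap_cfg \<eta> x y))"
    by (simp only: sum.distrib)
  also have "\<dots> = Pop (\<Sum>x\<in>UNIV. \<Sum>y\<in>UNIV. J x y / 4) (\<lambda>x y. - J x y / 4) \<psi> \<eta>"
    unfolding Pop_def of_real_sum sum_distrib_right by simp
  finally show "heis_ham J \<psi> \<eta> = Pop (\<Sum>x\<in>UNIV. \<Sum>y\<in>UNIV. J x y / 4) (\<lambda>x y. - J x y / 4) \<psi> \<eta>" .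
qed

definition Rop :: "('v::finite) state \<Rightarrow> 'v state" where
  "Rop \<psi> = (\<lambda>\<eta>. \<Sum>x\<in>UNIV. upo x \<psi> \<eta>)"
definition Dop :: "('v::finite) state \<Rightarrow> 'v state" where
  "Dop \<psi> = (\<lambda>\<eta>. \<Sum>x\<in>UNIV. dno x \<psi> \<eta>)"
definition kc :: "('v::finite \<Rightarrow> bool) \<Rightarrow> nat" where "kc \<eta> = card {x. \<eta> x}"
definition mv :: "('v::finite \<Rightarrow> bool) \<Rightarrow> real" where "mv \<eta> = real (kc \<eta>) - real CARD('v) / 2"

lemma dno_sum: "dno x (\<lambda>\<eta>'. \<Sum>y\<in>A. f y \<eta>') \<eta> = (\<Sum>y\<in>A. dno x (f y) \<eta>)"
  by (simp add: dno_def)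
lemma upo_sum: "upo x (\<lambda>\<eta>'. \<Sum>y\<in>A. f y \<eta>') \<eta> = (\<Sum>y\<in>A. upo x (f y) \<eta>)"
  by (simp add: upo_def)

lemma upo_dno_comm:
  "upo x (dno y \<psi>) \<eta> = dno y (upo x \<psi>) \<eta> + (if x = y then 2 * sgn_b (\<eta> x) * \<psi> \<eta> else 0)"
  by (cases "x = y"; cases "\<eta> x"; cases "\<eta> y")
     (simp_all add: upo_def dno_def sgn_b_def fun_upd_twist fun_upd_idem)

lemma sum_sgn_b: "(\<Sum>x\<in>UNIV. sgn_b (\<eta> x)) = complex_of_real (mv (\<eta>::'v::finite \<Rightarrow> bool))"
proof -
  have "(\<Sum>x\<in>UNIV. sgn_b (\<eta> x)) = (\<Sum>x\<in>UNIV. (if \<eta> x then 1 else 0) - 1/2)"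
    by (intro sum.cong) (auto simp: sgn_b_def)
  also have "\<dots> = of_nat (card {x. \<eta> x}) - of_nat CARD('v) / 2"
    by (simp add: sum_subtractf sum.If_cases)
  finally show ?thesis by (simp add: mv_def kc_def)
qed

lemma sum_sq_aux: "(\<Sum>x\<in>A. \<Sum>y\<in>B. f x * g y * (c::complex)) = (\<Sum>x\<in>A. f x) * (\<Sum>y\<in>B. g y) * c"
proof -
  have "(\<Sum>x\<in>A. f x) * (\<Sum>y\<in>B. g y) * c = (\<Sum>x\<in>A. \<Sum>y\<in>B. f x * g y) * c"
    by (simp only: sum_product)
  also have "\<dots> = (\<Sum>x\<in>A. (\<Sum>y\<in>B. f x * g y) * c)" by (rule sum_distrib_right)
  also have "\<dots> = (\<Sum>x\<in>A. \<Sum>y\<in>B. f x * g y * c)" by (simp only: sum_distrib_right)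
  finally show ?thesis by simp
qed

lemma sum_sgn_sq: "(\<Sum>x\<in>UNIV. \<Sum>y\<in>UNIV. sgn_b (\<eta> x) * sgn_b (\<eta> y) * \<psi> \<eta>)
   = complex_of_real (mv (\<eta>::'v::finite \<Rightarrow> bool) ^ 2) * \<psi> \<eta>"
proof -
  have "(\<Sum>x\<in>UNIV. \<Sum>y\<in>UNIV. sgn_b (\<eta> x) * sgn_b (\<eta> y) * \<psi> \<eta>)
     = (\<Sum>x\<in>UNIV. sgn_b (\<eta> x)) * (\<Sum>y\<in>UNIV. sgn_b (\<eta> y)) * \<psi> \<eta>"
    by (rule sum_sq_aux)
  then show ?thesis by (simp add: sum_sgn_b power2_eq_square)
qed

lemma DR_expand: "Dop (Rop \<psi>) \<eta> = (\<Sum>x\<in>UNIV. \<Sum>y\<in>UNIV. dno x (upo y \<psi>) \<eta>)"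
  unfolding Dop_def Rop_def by (simp only: dno_sum)
lemma RD_expand: "Rop (Dop \<psi>) \<eta> = (\<Sum>x\<in>UNIV. \<Sum>y\<in>UNIV. upo x (dno y \<psi>) \<eta>)"
  unfolding Dop_def Rop_def by (simp only: upo_sum)

lemma RD_DR: "Rop (Dop \<psi>) \<eta> = Dop (Rop \<psi>) \<eta> + 2 * complex_of_real (mv \<eta>) * \<psi> \<eta>"
proof -
  have "Rop (Dop \<psi>) \<eta> = (\<Sum>x\<in>UNIV. \<Sum>y\<in>UNIV. dno y (upo x \<psi>) \<eta>
        + (if x = y then 2 * sgn_b (\<eta> x) * \<psi> \<eta> else 0))"
    unfolding RD_expand upo_dno_comm ..
  also have "\<dots> = (\<Sum>x\<in>UNIV. \<Sum>y\<in>UNIV. dno y (upo x \<psi>) \<eta>) + (\<Sum>x\<in>UNIV. 2 * sgn_b (\<eta> x) * \<psi> \<eta>)"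
    by (simp add: sum.distrib)
  also have "(\<Sum>x\<in>UNIV. \<Sum>y\<in>UNIV. dno y (upo x \<psi>) \<eta>) = Dop (Rop \<psi>) \<eta>"
    unfolding DR_expand by (rule sum.swap)
  also have "(\<Sum>x\<in>UNIV. 2 * sgn_b (\<eta> x) * \<psi> \<eta>) = 2 * complex_of_real (mv \<eta>) * \<psi> \<eta>"
    by (simp add: sum_distrib_right[symmetric] sum_distrib_left[symmetric] sum_sgn_b)
  finally show ?thesis .
qed

lemma casimir_DR:
  "casimir \<psi> \<eta> = Dop (Rop \<psi>) \<eta> + complex_of_real (mv \<eta> ^ 2 + mv \<eta>) * \<psi> \<eta>"
proof -
  have "casimir \<psi> \<eta> = (\<Sum>x\<in>UNIV. \<Sum>y\<in>UNIV. dno x (upo y \<psi>) \<eta>) / 2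
       + (\<Sum>x\<in>UNIV. \<Sum>y\<in>UNIV. upo x (dno y \<psi>) \<eta>) / 2
       + (\<Sum>x\<in>UNIV. \<Sum>y\<in>UNIV. sgn_b (\<eta> x) * sgn_b (\<eta> y) * \<psi> \<eta>)"
    unfolding casimir_expand site_ladder by (simp add: sum.distrib add_divide_distrib sum_divide_distrib)
  also have "\<dots> = Dop (Rop \<psi>) \<eta> / 2 + Rop (Dop \<psi>) \<eta> / 2 + complex_of_real (mv \<eta> ^ 2) * \<psi> \<eta>"
    unfolding DR_expand RD_expand sum_sgn_sq ..
  finally have h: "casimir \<psi> \<eta> = Dop (Rop \<psi>) \<eta> / 2 + Rop (Dop \<psi>) \<eta> / 2 + complex_of_real (mv \<eta> ^ 2) * \<psi> \<eta>" .
  have h2: "casimir \<psi> \<eta> * 2 = (Dop (Rop \<psi>) \<eta> + complex_of_real (mv \<eta> ^ 2 + mv \<eta>) * \<psi> \<eta>) * 2"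
    using h by (simp add: RD_DR field_simps power2_eq_square)
  show ?thesis by (rule mult_right_cancel[THEN iffD1, OF _ h2]) simp
qed

lemma casimir_RD:
  "casimir \<psi> \<eta> = Rop (Dop \<psi>) \<eta> + complex_of_real (mv \<eta> ^ 2 - mv \<eta>) * \<psi> \<eta>"
  unfolding casimir_DR RD_DR by (simp add: field_simps)

lemma swap_eq: "swap_cfg \<eta> x y = (\<lambda>u. \<eta> (Transposition.transpose x y u))"
  by (auto simp: swap_cfg_def Transposition.transpose_def fun_eq_iff)

lemma swap_swap[simp]: "swap_cfg (swap_cfg \<eta> x y) x y = \<eta>"
  by (simp add: swap_eq)

lemma swap_const[simp]: "swap_cfg (\<lambda>_. c) x y = (\<lambda>_. c)"
  by (simp add: swap_eq)

lemma kc_swap[simp]: "kc (swap_cfg \<eta> x y) = kc \<eta>"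
proof -
  have "{z. swap_cfg \<eta> x y z} = Transposition.transpose x y ` {z. \<eta> z}"
  proof (auto simp: swap_eq)
    fix z assume "\<eta> (Transposition.transpose x y z)"
    then show "z \<in> Transposition.transpose x y ` {z. \<eta> z}" by (intro image_eqI[of _ _ "Transposition.transpose x y z"]) simp_all
  qed
  then show ?thesis unfolding kc_def by (simp add: card_image)
qed

lemma kc_le: "kc (\<eta>::'v::finite \<Rightarrow> bool) \<le> CARD('v)"
  unfolding kc_def by (rule card_mono) auto

lemma kc_down: "\<eta> z \<Longrightarrow> kc \<eta> = Suc (kc (\<eta>(z:=False)))"
proof -
  assume z: "\<eta> z"
  have e: "{u. (\<eta>(z:=False)) u} = {u. \<eta> u} - {z}" by auto
  have "kc (\<eta>(z:=False)) = kc \<eta> - 1" unfolding kc_def e by (simp add: card_Diff_singleton z)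
  moreover have "kc \<eta> \<ge> 1" unfolding kc_def using z by (auto simp: card_gt_0_iff Suc_le_eq)
  ultimately show ?thesis by simp
qed

lemma kc_up: "\<not> \<eta> z \<Longrightarrow> kc (\<eta>(z:=True)) = Suc (kc \<eta>)"
proof -
  assume z: "\<not> \<eta> z"
  have "(\<eta>(z:=True))(z:=False) = \<eta>" using z by (simp add: fun_upd_idem)
  then show ?thesis using kc_down[of "\<eta>(z:=True)" z] by simp
qed

lemma kc_all: "kc (\<eta>::'v::finite \<Rightarrow> bool) = CARD('v) \<Longrightarrow> \<eta> = (\<lambda>_. True)"
proof -
  assume "kc \<eta> = CARD('v)"
  then have "{x. \<eta> x} = UNIV" unfolding kc_def using card_subset_eq[of UNIV "{x. \<eta> x}"] by auto
  then show ?thesis by auto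
qed

lemma kc_none: "kc (\<eta>::'v::finite \<Rightarrow> bool) = 0 \<Longrightarrow> \<eta> = (\<lambda>_. False)"
  unfolding kc_def by auto

definition sector :: "nat \<Rightarrow> ('v::finite) state \<Rightarrow> bool" where
  "sector n \<psi> \<longleftrightarrow> (\<forall>\<eta>. \<psi> \<eta> \<noteq> 0 \<longrightarrow> kc \<eta> = n)"

lemma sector_big: "sector n (\<psi>::'v::finite state) \<Longrightarrow> n > CARD('v) \<Longrightarrow> \<psi> = (\<lambda>_. 0)"
proof
  fix \<eta> assume s: "sector n \<psi>" and n: "n > CARD('v)"
  show "\<psi> \<eta> = 0"
  proof (rule ccontr)
    assume "\<psi> \<eta> \<noteq> 0"
    then have "kc \<eta> = n" using s unfolding sector_def by blast
    then show False using kc_le[of \<eta>] n by simp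
  qed
qed

lemma Pop_sector: "sector n \<psi> \<Longrightarrow> sector n (Pop a b \<psi>)"
  unfolding sector_def
proof (intro allI impI)
  fix \<eta> assume s: "\<forall>\<eta>. \<psi> \<eta> \<noteq> 0 \<longrightarrow> kc \<eta> = n" and ne: "Pop a b \<psi> \<eta> \<noteq> 0"
  show "kc \<eta> = n"
  proof (rule ccontr)
    assume k: "kc \<eta> \<noteq> n"
    then have "\<psi> \<eta> = 0" using s by blast
    moreover have "\<And>x y. \<psi> (swap_cfg \<eta> x y) = 0" using s k by (metis kc_swap)
    ultimately have "Pop a b \<psi> \<eta> = 0" unfolding Pop_def by simp
    then show False using ne by simp
  qed
qed

lemma Rop_sector: "sector n \<psi> \<Longrightarrow> sector (Suc n) (Rop \<psi>)"
  unfolding sector_def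
proof (intro allI impI)
  fix \<eta> assume h: "\<forall>\<eta>. \<psi> \<eta> \<noteq> 0 \<longrightarrow> kc \<eta> = n" and ne: "Rop \<psi> \<eta> \<noteq> 0"
  then obtain z where "upo z \<psi> \<eta> \<noteq> 0" unfolding Rop_def by (meson sum.neutral)
  then have "\<eta> z" "\<psi> (\<eta>(z:=False)) \<noteq> 0" unfolding upo_def by (auto split: if_splits)
  then show "kc \<eta> = Suc n" using h kc_down[of \<eta> z] by simp
qed

lemma Dop_sector: "sector n \<psi> \<Longrightarrow> Dop \<psi> \<eta> \<noteq> 0 \<Longrightarrow> Suc (kc \<eta>) = n"
proof -
  assume h: "sector n \<psi>" and ne: "Dop \<psi> \<eta> \<noteq> 0"
  then obtain z where "dno z \<psi> \<eta> \<noteq> 0" unfolding Dop_def by (meson sum.neutral)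
  then have "\<not> \<eta> z" "\<psi> (\<eta>(z:=True)) \<noteq> 0" unfolding dno_def by (auto split: if_splits)
  then show "Suc (kc \<eta>) = n" using h kc_up[of \<eta> z] unfolding sector_def by simp
qed

lemma Dop_sector': assumes "sector (Suc n) \<psi>" shows "sector n (Dop \<psi>)"
  unfolding sector_def using Dop_sector[OF assms] by simp

lemma Dop_sector0: "sector 0 \<psi> \<Longrightarrow> Dop \<psi> = (\<lambda>_. 0)"
proof
  fix \<eta> assume "sector 0 \<psi>"
  then show "Dop \<psi> \<eta> = 0" using Dop_sector[of 0 \<psi> \<eta>] by auto
qed

lemma Rop_iter_sector: "sector n \<psi> \<Longrightarrow> sector (n + j) ((Rop ^^ j) \<psi>)"
  by (induction j) (auto intro: Rop_sector)

lemma Dop_iter_sector: "sector n \<psi> \<Longrightarrow> j \<le> n \<Longrightarrow> sector (n - j) ((Dop ^^ j) \<psi>)"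
proof (induction j)
  case 0 then show ?case by simp
next
  case (Suc j)
  then have "sector (Suc (n - Suc j)) ((Dop ^^ j) \<psi>)" by (simp add: Suc_diff_Suc)
  then show ?case by (simp add: Dop_sector')
qed

lemma reindex_transpose: "(\<Sum>z\<in>UNIV. g (Transposition.transpose x y z)) = (\<Sum>z\<in>UNIV. (g z :: complex))"
  by (rule sum.reindex_bij_betw) simp

lemma sum3_swap: "(\<Sum>z\<in>A. \<Sum>x\<in>B. \<Sum>y\<in>C. f z x y) = (\<Sum>x\<in>B. \<Sum>y\<in>C. \<Sum>z\<in>A. (f z x y :: complex))"
  by (subst sum.swap, rule sum.cong[OF refl], rule sum.swap)

lemma Rop_alt: "Rop \<psi> \<eta> = (\<Sum>z\<in>UNIV. of_bool (\<eta> z) * \<psi> (\<eta>(z:=False)))"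
  unfolding Rop_def upo_def by (intro sum.cong refl) simp
lemma Dop_alt: "Dop \<psi> \<eta> = (\<Sum>z\<in>UNIV. of_bool (\<not> \<eta> z) * \<psi> (\<eta>(z:=True)))"
  unfolding Dop_def dno_def by (intro sum.cong refl) simp

lemma Rop_swap_aux:
  fixes \<psi> :: "('v::finite) state"
  shows "(\<Sum>z\<in>UNIV. of_bool (swap_cfg \<eta> x y z) * \<psi> ((swap_cfg \<eta> x y)(z:=False)))
   = (\<Sum>z\<in>UNIV. of_bool (\<eta> z) * \<psi> (swap_cfg (\<eta>(z:=False)) x y))"
proof -
  have "(\<Sum>z\<in>UNIV. of_bool (swap_cfg \<eta> x y z) * \<psi> ((swap_cfg \<eta> x y)(z:=False)))
      = (\<Sum>z\<in>UNIV. of_bool (swap_cfg \<eta> x y (Transposition.transpose x y z)) * \<psi> ((swap_cfg \<eta> x y)(Transposition.transpose x y z:=False)))"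
    by (rule reindex_transpose[of "\<lambda>z. of_bool (swap_cfg \<eta> x y z) * \<psi> ((swap_cfg \<eta> x y)(z:=False))", symmetric])
  also have "\<dots> = (\<Sum>z\<in>UNIV. of_bool (\<eta> z) * \<psi> (swap_cfg (\<eta>(z:=False)) x y))"
  proof (intro sum.cong refl)
    fix z
    have "(swap_cfg \<eta> x y)(Transposition.transpose x y z:=False) = swap_cfg (\<eta>(z:=False)) x y"
      by (auto simp: swap_eq fun_eq_iff transpose_eq_iff)
    then show "of_bool (swap_cfg \<eta> x y (Transposition.transpose x y z)) * \<psi> ((swap_cfg \<eta> x y)(Transposition.transpose x y z:=False))
      = of_bool (\<eta> z) * \<psi> (swap_cfg (\<eta>(z:=False)) x y)" by (simp add: swap_eq)
  qed
  finally show ?thesis .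
qed

lemma Dop_swap_aux:
  fixes \<psi> :: "('v::finite) state"
  shows "(\<Sum>z\<in>UNIV. of_bool (\<not> swap_cfg \<eta> x y z) * \<psi> ((swap_cfg \<eta> x y)(z:=True)))
   = (\<Sum>z\<in>UNIV. of_bool (\<not> \<eta> z) * \<psi> (swap_cfg (\<eta>(z:=True)) x y))"
proof -
  have "(\<Sum>z\<in>UNIV. of_bool (\<not> swap_cfg \<eta> x y z) * \<psi> ((swap_cfg \<eta> x y)(z:=True)))
      = (\<Sum>z\<in>UNIV. of_bool (\<not> swap_cfg \<eta> x y (Transposition.transpose x y z)) * \<psi> ((swap_cfg \<eta> x y)(Transposition.transpose x y z:=True)))"
    by (rule reindex_transpose[of "\<lambda>z. of_bool (\<not> swap_cfg \<eta> x y z) * \<psi> ((swap_cfg \<eta> x y)(z:=True))", symmetric])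
  also have "\<dots> = (\<Sum>z\<in>UNIV. of_bool (\<not> \<eta> z) * \<psi> (swap_cfg (\<eta>(z:=True)) x y))"
  proof (intro sum.cong refl)
    fix z
    have "(swap_cfg \<eta> x y)(Transposition.transpose x y z:=True) = swap_cfg (\<eta>(z:=True)) x y"
      by (auto simp: swap_eq fun_eq_iff transpose_eq_iff)
    then show "of_bool (\<not> swap_cfg \<eta> x y (Transposition.transpose x y z)) * \<psi> ((swap_cfg \<eta> x y)(Transposition.transpose x y z:=True))
      = of_bool (\<not> \<eta> z) * \<psi> (swap_cfg (\<eta>(z:=True)) x y)" by (simp add: swap_eq)
  qed
  finally show ?thesis .
qed

lemma distr_aux: "(\<Sum>z\<in>A. c z * (a * f z + (\<Sum>x\<in>B. \<Sum>y\<in>C. b x y * g z x y))) =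
  a * (\<Sum>z\<in>A. c z * f z) + (\<Sum>z\<in>A. \<Sum>x\<in>B. \<Sum>y\<in>C. b x y * (c z * g z x y :: complex))"
proof -
  have "\<And>z. c z * (a * f z + (\<Sum>x\<in>B. \<Sum>y\<in>C. b x y * g z x y)) = a * (c z * f z) + (\<Sum>x\<in>B. \<Sum>y\<in>C. b x y * (c z * g z x y))"
    by (simp add: distrib_left sum_distrib_left mult.left_commute)
  then show ?thesis by (simp add: sum.distrib sum_distrib_left)
qed

lemma Rop_Pop: "Rop (Pop a b \<psi>) = Pop a b (Rop \<psi>)"
proof
  fix \<eta>
  have "Rop (Pop a b \<psi>) \<eta> = (\<Sum>z\<in>UNIV. of_bool (\<eta> z) * (complex_of_real a * \<psi> (\<eta>(z:=False))
     + (\<Sum>x\<in>UNIV. \<Sum>y\<in>UNIV. complex_of_real (b x y) * \<psi> (swap_cfg (\<eta>(z:=False)) x y))))"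
    unfolding Rop_alt Pop_def ..
  also have "\<dots> = complex_of_real a * (\<Sum>z\<in>UNIV. of_bool (\<eta> z) * \<psi> (\<eta>(z:=False)))
     + (\<Sum>z\<in>UNIV. \<Sum>x\<in>UNIV. \<Sum>y\<in>UNIV. complex_of_real (b x y) * (of_bool (\<eta> z) * \<psi> (swap_cfg (\<eta>(z:=False)) x y)))"
    by (rule distr_aux)
  also have "\<dots> = complex_of_real a * (\<Sum>z\<in>UNIV. of_bool (\<eta> z) * \<psi> (\<eta>(z:=False)))
     + (\<Sum>x\<in>UNIV. \<Sum>y\<in>UNIV. complex_of_real (b x y) * (\<Sum>z\<in>UNIV. of_bool (\<eta> z) * \<psi> (swap_cfg (\<eta>(z:=False)) x y)))"
    by (subst sum3_swap) (simp only: sum_distrib_left)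
  also have "\<dots> = Pop a b (Rop \<psi>) \<eta>"
    unfolding Pop_def Rop_alt Rop_swap_aux ..
  finally show "Rop (Pop a b \<psi>) \<eta> = Pop a b (Rop \<psi>) \<eta>" .
qed

lemma Dop_Pop: "Dop (Pop a b \<psi>) = Pop a b (Dop \<psi>)"
proof
  fix \<eta>
  have "Dop (Pop a b \<psi>) \<eta> = (\<Sum>z\<in>UNIV. of_bool (\<not> \<eta> z) * (complex_of_real a * \<psi> (\<eta>(z:=True))
     + (\<Sum>x\<in>UNIV. \<Sum>y\<in>UNIV. complex_of_real (b x y) * \<psi> (swap_cfg (\<eta>(z:=True)) x y))))"
    unfolding Dop_alt Pop_def ..
  also have "\<dots> = complex_of_real a * (\<Sum>z\<in>UNIV. of_bool (\<not> \<eta> z) * \<psi> (\<eta>(z:=True)))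
     + (\<Sum>z\<in>UNIV. \<Sum>x\<in>UNIV. \<Sum>y\<in>UNIV. complex_of_real (b x y) * (of_bool (\<not> \<eta> z) * \<psi> (swap_cfg (\<eta>(z:=True)) x y)))"
    by (rule distr_aux)
  also have "\<dots> = complex_of_real a * (\<Sum>z\<in>UNIV. of_bool (\<not> \<eta> z) * \<psi> (\<eta>(z:=True)))
     + (\<Sum>x\<in>UNIV. \<Sum>y\<in>UNIV. complex_of_real (b x y) * (\<Sum>z\<in>UNIV. of_bool (\<not> \<eta> z) * \<psi> (swap_cfg (\<eta>(z:=True)) x y)))"
    by (subst sum3_swap) (simp only: sum_distrib_left)
  also have "\<dots> = Pop a b (Dop \<psi>) \<eta>"
    unfolding Pop_def Dop_alt Dop_swap_aux ..
  finally show "Dop (Pop a b \<psi>) \<eta> = Pop a b (Dop \<psi>) \<eta>" .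
qed

lemma Rop_iter_Pop: "(Rop ^^ j) (Pop a b \<psi>) = Pop a b ((Rop ^^ j) \<psi>)"
  by (induction j) (auto simp: Rop_Pop)
lemma Dop_iter_Pop: "(Dop ^^ j) (Pop a b \<psi>) = Pop a b ((Dop ^^ j) \<psi>)"
  by (induction j) (auto simp: Dop_Pop)

definition proj :: "nat \<Rightarrow> ('v::finite) state \<Rightarrow> 'v state" where
  "proj k \<psi> = (\<lambda>\<eta>. if kc \<eta> = k then \<psi> \<eta> else 0)"

lemma proj_sector: "sector k (proj k \<psi>)" unfolding sector_def proj_def by auto

lemma Pop_proj: "Pop a b (proj k \<psi>) = proj k (Pop a b \<psi>)"
  unfolding Pop_def proj_def by (auto simp: fun_eq_iff)

lemma first_zero:
  assumes "f (k::nat) = z" "f 0 \<noteq> z"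
  shows "\<exists>j0. (\<forall>j \<le> j0. f j \<noteq> z) \<and> f (Suc j0) = z"
proof -
  define j1 where "j1 = (LEAST j. f j = z)"
  have f1: "f j1 = z" unfolding j1_def by (rule LeastI[of _ k]) (rule assms(1))
  have lt: "\<And>j. j < j1 \<Longrightarrow> f j \<noteq> z" unfolding j1_def by (rule not_less_Least)
  have "j1 \<noteq> 0"
  proof
    assume "j1 = 0" then show False using f1 assms(2) by simp
  qed
  then have "Suc (j1 - 1) = j1" by simp
  moreover have "\<forall>j \<le> j1 - 1. f j \<noteq> z" using lt \<open>j1 \<noteq> 0\<close> by auto
  ultimately show ?thesis using f1 by metis
qed

lemma Rop_scale: "Rop (\<lambda>\<eta>. c * \<psi> \<eta>) = (\<lambda>\<eta>. c * Rop \<psi> \<eta>)"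
  by (rule ext, unfold Rop_alt) (simp only: sum_distrib_left mult.left_commute)
lemma Dop_scale: "Dop (\<lambda>\<eta>. c * \<psi> \<eta>) = (\<lambda>\<eta>. c * Dop \<psi> \<eta>)"
  by (rule ext, unfold Dop_alt) (simp only: sum_distrib_left mult.left_commute)
lemma Rop_iter_scale: "(Rop ^^ j) (\<lambda>\<eta>. c * \<psi> \<eta>) = (\<lambda>\<eta>. c * (Rop ^^ j) \<psi> \<eta>)"
  by (induction j) (auto simp: Rop_scale)
lemma Dop_iter_scale: "(Dop ^^ j) (\<lambda>\<eta>. c * \<psi> \<eta>) = (\<lambda>\<eta>. c * (Dop ^^ j) \<psi> \<eta>)"
  by (induction j) (auto simp: Dop_scale)

lemma casimir_Rop_iter:
  assumes "casimir \<phi> = (\<lambda>\<eta>. complex_of_real \<mu> * \<phi> \<eta>)"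
  shows "casimir ((Rop ^^ j) \<phi>) = (\<lambda>\<eta>. complex_of_real \<mu> * (Rop ^^ j) \<phi> \<eta>)"
  using assms by (simp add: casimir_Pop Rop_iter_Pop[symmetric] Rop_iter_scale)
lemma casimir_Dop_iter:
  assumes "casimir \<phi> = (\<lambda>\<eta>. complex_of_real \<mu> * \<phi> \<eta>)"
  shows "casimir ((Dop ^^ j) \<phi>) = (\<lambda>\<eta>. complex_of_real \<mu> * (Dop ^^ j) \<phi> \<eta>)"
  using assms by (simp add: casimir_Pop Dop_iter_Pop[symmetric] Dop_iter_scale)

lemma nonzero_point: "\<psi> \<noteq> (\<lambda>_. 0) \<Longrightarrow> \<exists>\<eta>. \<psi> \<eta> \<noteq> 0" by auto

lemma ladder:
  fixes \<phi> :: "'v::finite state"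
  assumes sec: "sector n \<phi>" and nz: "\<phi> \<noteq> (\<lambda>_. 0)"
    and eig: "casimir \<phi> = (\<lambda>\<eta>. complex_of_real \<mu> * \<phi> \<eta>)"
  shows "\<exists>a b. a \<le> n \<and> n \<le> b \<and> b \<le> CARD('v) \<and> a + b = CARD('v) \<and>
     \<mu> = (real b - real CARD('v)/2) * (real b - real CARD('v)/2 + 1) \<and>
     (\<forall>j \<le> b - n. (Rop ^^ j) \<phi> \<noteq> (\<lambda>_. 0)) \<and> (\<forall>i \<le> n - a. (Dop ^^ i) \<phi> \<noteq> (\<lambda>_. 0))"
proof -
  let ?N = "CARD('v)"
  have "(Rop ^^ (Suc ?N)) \<phi> = (\<lambda>_. 0)"
    using sector_big[OF Rop_iter_sector[OF sec, of "Suc ?N"]] by simp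
  then obtain j0 where j0: "\<forall>j \<le> j0. (Rop ^^ j) \<phi> \<noteq> (\<lambda>_. 0)" "(Rop ^^ Suc j0) \<phi> = (\<lambda>_. 0)"
    using first_zero[of "\<lambda>j. (Rop ^^ j) \<phi>" "Suc ?N" "\<lambda>_. 0"] nz by auto
  have "sector 0 ((Dop ^^ n) \<phi>)" using Dop_iter_sector[OF sec, of n] by simp
  then have "(Dop ^^ (Suc n)) \<phi> = (\<lambda>_. 0)"
    using Dop_sector0 by simp
  then obtain i0 where i0: "\<forall>i \<le> i0. (Dop ^^ i) \<phi> \<noteq> (\<lambda>_. 0)" "(Dop ^^ Suc i0) \<phi> = (\<lambda>_. 0)"
    using first_zero[of "\<lambda>j. (Dop ^^ j) \<phi>" "Suc n" "\<lambda>_. 0"] nz by auto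
  have i0n: "i0 \<le> n"
  proof (rule ccontr)
    assume "\<not> i0 \<le> n"
    then have "Suc n \<le> i0" by simp
    then have "(Dop ^^ (Suc n)) \<phi> \<noteq> (\<lambda>_. 0)" using i0(1) by blast
    then show False using \<open>(Dop ^^ (Suc n)) \<phi> = (\<lambda>_. 0)\<close> by simp
  qed
  define \<psi> where "\<psi> = (Rop ^^ j0) \<phi>"
  have \<psi>nz: "\<psi> \<noteq> (\<lambda>_. 0)" using j0(1) unfolding \<psi>_def by simp
  then obtain \<eta> where \<eta>: "\<psi> \<eta> \<noteq> 0" by auto
  have k\<eta>: "kc \<eta> = n + j0" using Rop_iter_sector[OF sec, of j0] \<eta> unfolding \<psi>_def sector_def by blast
  have R\<psi>: "Rop \<psi> = (\<lambda>_. 0)" using j0(2) unfolding \<psi>_def by simp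
  have "casimir \<psi> \<eta> = complex_of_real \<mu> * \<psi> \<eta>"
    using casimir_Rop_iter[OF eig, of j0] unfolding \<psi>_def by simp
  moreover have "casimir \<psi> \<eta> = complex_of_real (mv \<eta> ^ 2 + mv \<eta>) * \<psi> \<eta>"
    unfolding casimir_DR R\<psi> by (simp add: Dop_def dno_def)
  ultimately have "complex_of_real \<mu> = complex_of_real (mv \<eta> ^ 2 + mv \<eta>)" using \<eta> by simp
  then have mu1: "\<mu> = mv \<eta> ^ 2 + mv \<eta>" by (simp only: of_real_eq_iff)
  have bN: "n + j0 \<le> ?N" using kc_le[of \<eta>] k\<eta> by simp
  define \<rho> where "\<rho> = (Dop ^^ i0) \<phi>"
  have \<rho>nz: "\<rho> \<noteq> (\<lambda>_. 0)" using i0(1) unfolding \<rho>_def by simp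
  then obtain \<zeta> where \<zeta>: "\<rho> \<zeta> \<noteq> 0" by auto
  have k\<zeta>: "kc \<zeta> = n - i0" using Dop_iter_sector[OF sec i0n] \<zeta> unfolding \<rho>_def sector_def by blast
  have D\<rho>: "Dop \<rho> = (\<lambda>_. 0)" using i0(2) unfolding \<rho>_def by simp
  have "casimir \<rho> \<zeta> = complex_of_real \<mu> * \<rho> \<zeta>"
    using casimir_Dop_iter[OF eig, of i0] unfolding \<rho>_def by simp
  moreover have "casimir \<rho> \<zeta> = complex_of_real (mv \<zeta> ^ 2 - mv \<zeta>) * \<rho> \<zeta>"
    unfolding casimir_RD D\<rho> by (simp add: Rop_def upo_def)
  ultimately have "complex_of_real \<mu> = complex_of_real (mv \<zeta> ^ 2 - mv \<zeta>)" using \<zeta> by simp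
  then have mu2: "\<mu> = mv \<zeta> ^ 2 - mv \<zeta>" by (simp only: of_real_eq_iff)
  have x: "mv \<eta> = real (n + j0) - real ?N / 2" unfolding mv_def k\<eta> ..
  have y: "mv \<zeta> = real (n - i0) - real ?N / 2" unfolding mv_def k\<zeta> ..
  have ge: "mv \<eta> \<ge> mv \<zeta>" unfolding x y using i0n by simp
  have "(mv \<eta> + mv \<zeta>) * (mv \<eta> - mv \<zeta> + 1) = 0" using mu1 mu2 by (simp add: algebra_simps power2_eq_square)
  then have "mv \<eta> + mv \<zeta> = 0" using ge by simp
  then have sum: "(n - i0) + (n + j0) = ?N" unfolding x y using i0n by (simp add: field_simps)
  show ?thesis
  proof (intro exI conjI)
    show "n - i0 \<le> n" by simp
    show "n \<le> n + j0" by simp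
    show "n + j0 \<le> ?N" by (rule bN)
    show "n - i0 + (n + j0) = ?N" by (rule sum)
    show "\<mu> = (real (n + j0) - real ?N / 2) * (real (n + j0) - real ?N / 2 + 1)"
      unfolding mu1 x by (simp add: power2_eq_square field_simps)
    show "\<forall>j \<le> n + j0 - n. (Rop ^^ j) \<phi> \<noteq> (\<lambda>_. 0)" using j0(1) by simp
    show "\<forall>i \<le> n - (n - i0). (Dop ^^ i) \<phi> \<noteq> (\<lambda>_. 0)" using i0(1) i0n by simp
  qed
qed

lemma quad_zero:
  fixes a b :: real
  assumes "\<forall>t. 0 \<le> 2 * t * a + t^2 * b"
  shows "a = 0"
proof (rule ccontr)
  assume a: "a \<noteq> 0"
  define B where "B = \<bar>b\<bar> + 1"
  have B: "B > 0" "\<bar>b\<bar> \<le> B" unfolding B_def by auto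
  define t where "t = - a / B"
  have h1: "0 \<le> 2 * t * a + t^2 * b" using assms by blast
  have h2: "t^2 * b \<le> t^2 * B" using B by (intro mult_left_mono) auto
  have h3: "2 * t * a + t^2 * B = -(a^2) / B"
    unfolding t_def using B by (simp add: field_simps power2_eq_square)
  have h4: "-(a^2) / B < 0" using a B by (simp add: divide_pos_pos)
  show False using h1 h2 h3 h4 by linarith
qed

lemma sym_orth:
  fixes T :: "'a::real_inner \<Rightarrow> 'a"
  assumes sym: "\<forall>x y. inner (T x) y = inner x (T y)"
    and "T x = a *\<^sub>R x" "T y = b *\<^sub>R y" "a \<noteq> b"
  shows "inner x y = 0"
proof -
  have "a * inner x y = b * inner x y"
    using sym[rule_format, of x y] assms(2,3) by simp
  then show ?thesis using assms(4) by simp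
qed

lemma finite_eigs:
  fixes T :: "'a::euclidean_space \<Rightarrow> 'a"
  assumes sym: "\<forall>x y. inner (T x) y = inner x (T y)"
  shows "finite {\<mu>. \<exists>x. x \<noteq> 0 \<and> T x = \<mu> *\<^sub>R x}"
proof -
  define E where "E = {\<mu>. \<exists>x. x \<noteq> 0 \<and> T x = \<mu> *\<^sub>R x}"
  define e where "e \<mu> = (SOME x. x \<noteq> 0 \<and> T x = \<mu> *\<^sub>R x)" for \<mu>
  have e: "e \<mu> \<noteq> 0 \<and> T (e \<mu>) = \<mu> *\<^sub>R e \<mu>" if "\<mu> \<in> E" for \<mu>
    using that unfolding E_def e_def by (metis (mono_tags, lifting) mem_Collect_eq someI_ex)
  have inj: "inj_on e E"
  proof (rule inj_onI)
    fix \<mu> \<nu> assume "\<mu> \<in> E" "\<nu> \<in> E" "e \<mu> = e \<nu>"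
    then have "\<mu> *\<^sub>R e \<mu> = \<nu> *\<^sub>R e \<mu>" using e by metis
    then show "\<mu> = \<nu>" using e[OF \<open>\<mu> \<in> E\<close>] by (simp add: scaleR_cancel_right)
  qed
  have "pairwise orthogonal (e ` E)"
    unfolding pairwise_def orthogonal_def
  proof (clarify)
    fix \<mu> \<nu> assume "\<mu> \<in> E" "\<nu> \<in> E" "e \<mu> \<noteq> e \<nu>"
    then have "\<mu> \<noteq> \<nu>" by auto
    then show "inner (e \<mu>) (e \<nu>) = 0"
      using sym_orth[OF sym] e[OF \<open>\<mu> \<in> E\<close>] e[OF \<open>\<nu> \<in> E\<close>] by blast
  qed
  moreover have "0 \<notin> e ` E" using e by auto
  ultimately have "independent (e ` E)" by (rule pairwise_orthogonal_independent)
  then have "finite (e ` E)" using independent_bound by blast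
  then have "finite E" using inj finite_imageD by blast
  then show ?thesis unfolding E_def .
qed

lemma exists_eig:
  fixes T :: "'a::euclidean_space \<Rightarrow> 'a"
  assumes lin: "linear T" and sym: "\<forall>x y. inner (T x) y = inner x (T y)"
    and W: "subspace W" and inv: "\<forall>x\<in>W. T x \<in> W" and w: "w \<in> W" "w \<noteq> 0"
  shows "\<exists>x\<in>W. x \<noteq> 0 \<and> (\<exists>\<mu>. T x = \<mu> *\<^sub>R x)"
proof -
  define K where "K = sphere 0 1 \<inter> W"
  have "compact K" unfolding K_def
    by (intro compact_Int_closed compact_sphere closed_subspace W)
  moreover have "w /\<^sub>R norm w \<in> K" unfolding K_def using w W
    by (auto simp: subspace_scale)
  then have "K \<noteq> {}" by auto
  moreover have "continuous_on K (\<lambda>x. inner x (T x))"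
    using lin by (intro continuous_intros linear_continuous_on) (simp add: linear_conv_bounded_linear)
  ultimately obtain x0 where x0: "x0 \<in> K" "\<forall>y\<in>K. inner x0 (T x0) \<le> inner y (T y)"
    using continuous_attains_inf by blast
  define \<mu> where "\<mu> = inner x0 (T x0)"
  have x0W: "x0 \<in> W" and nx0: "norm x0 = 1" using x0(1) unfolding K_def by auto
  have x00: "inner x0 x0 = 1" using nx0 by (metis power2_norm_eq_inner power_one)
  have Tsc: "T (c *\<^sub>R v) = c *\<^sub>R T v" for c v using lin by (simp add: linear_scale)
  have Tadd: "T (u + v) = T u + T v" for u v using lin by (simp add: linear_add)
  have ge: "\<mu> * inner v v \<le> inner v (T v)" if "v \<in> W" for v
  proof (cases "v = 0")
    case True then show ?thesis using lin by (simp add: linear_0)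
  next
    case False
    define u where "u = v /\<^sub>R norm v"
    have "u \<in> K" unfolding K_def u_def using that False W by (auto simp: subspace_scale)
    then have "\<mu> \<le> inner u (T u)" using x0(2) unfolding \<mu>_def by blast
    also have "inner u (T u) = inner v (T v) / (norm v)^2"
      unfolding u_def Tsc using False by (simp add: power2_eq_square field_simps)
    finally have "\<mu> * (norm v)^2 \<le> inner v (T v)" using False by (simp add: field_simps)
    then show ?thesis by (simp add: power2_norm_eq_inner)
  qed
  have orth: "inner h (T x0 - \<mu> *\<^sub>R x0) = 0" if hW: "h \<in> W" for h
  proof -
    have "\<forall>t. 0 \<le> 2 * t * (inner h (T x0) - \<mu> * inner h x0) + t^2 * (inner h (T h) - \<mu> * inner h h)"
    proof
      fix t :: real
      have vW: "x0 + t *\<^sub>R h \<in> W" using W x0W hW by (simp add: subspace_add subspace_scale)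
      have g: "\<mu> * inner (x0 + t *\<^sub>R h) (x0 + t *\<^sub>R h) \<le> inner (x0 + t *\<^sub>R h) (T (x0 + t *\<^sub>R h))"
        by (rule ge[OF vW])
      have e1: "inner (x0 + t *\<^sub>R h) (x0 + t *\<^sub>R h) = 1 + 2 * t * inner h x0 + t^2 * inner h h"
        using x00 by (simp add: inner_add_left inner_add_right inner_commute power2_eq_square algebra_simps)
      have e2: "inner (x0 + t *\<^sub>R h) (T (x0 + t *\<^sub>R h)) = \<mu> + 2 * t * inner h (T x0) + t^2 * inner h (T h)"
        using sym[rule_format, of x0 h] unfolding Tadd Tsc \<mu>_def
        by (simp add: inner_add_left inner_add_right inner_commute power2_eq_square algebra_simps)
      have g2: "\<mu> * (1 + 2 * t * inner h x0 + t^2 * inner h h) \<le> \<mu> + 2 * t * inner h (T x0) + t^2 * inner h (T h)"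
        using g unfolding e1 e2 .
      have "2 * t * (inner h (T x0) - \<mu> * inner h x0) + t^2 * (inner h (T h) - \<mu> * inner h h)
          = (\<mu> + 2 * t * inner h (T x0) + t^2 * inner h (T h)) - \<mu> * (1 + 2 * t * inner h x0 + t^2 * inner h h)"
        by (simp add: algebra_simps)
      then show "0 \<le> 2 * t * (inner h (T x0) - \<mu> * inner h x0) + t^2 * (inner h (T h) - \<mu> * inner h h)"
        using g2 by linarith
    qed
    then have "inner h (T x0) - \<mu> * inner h x0 = 0" by (rule quad_zero)
    then show ?thesis by (simp add: inner_diff_right)
  qed
  have "T x0 - \<mu> *\<^sub>R x0 \<in> W" using W x0W inv by (simp add: subspace_diff subspace_scale)
  then have "inner (T x0 - \<mu> *\<^sub>R x0) (T x0 - \<mu> *\<^sub>R x0) = 0" by (rule orth)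
  then have "T x0 = \<mu> *\<^sub>R x0" by simp
  moreover have "x0 \<noteq> 0" using nx0 by auto
  ultimately show ?thesis using x0W by blast
qed


definition vv :: "('v::finite) state \<Rightarrow> complex^('v \<Rightarrow> bool)" where "vv \<psi> = (\<chi> \<eta>. \<psi> \<eta>)"
definition opv :: "(('v::finite) state \<Rightarrow> 'v state) \<Rightarrow> complex^('v \<Rightarrow> bool) \<Rightarrow> complex^('v \<Rightarrow> bool)" where
  "opv A v = vv (A (\<lambda>\<eta>. v $ \<eta>))"

lemma vv_nth[simp]: "(\<lambda>\<eta>. vv \<psi> $ \<eta>) = \<psi>" by (simp add: vv_def)
lemma vv_of_nth: "vv (\<lambda>\<eta>. v $ \<eta>) = v" by (simp add: vv_def vec_eq_iff)
lemma vv_zero_iff: "vv \<psi> = 0 \<longleftrightarrow> \<psi> = (\<lambda>_. 0)" by (auto simp: vv_def vec_eq_iff fun_eq_iff)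
lemma vv_inner: "inner (vv \<psi>) (vv \<phi>) = (\<Sum>\<eta>\<in>UNIV. inner (\<psi> \<eta>) (\<phi> \<eta>))" by (simp add: vv_def inner_vec_def)

lemma Pop_add: "Pop a b (\<lambda>\<eta>. f \<eta> + g \<eta>) = (\<lambda>\<eta>. Pop a b f \<eta> + Pop a b g \<eta>)"
  by (simp add: Pop_def fun_eq_iff distrib_left sum.distrib algebra_simps)
lemma Pop_scale: "Pop a b (\<lambda>\<eta>. c * f \<eta>) = (\<lambda>\<eta>. c * Pop a b f \<eta>)"
  by (simp add: Pop_def fun_eq_iff distrib_left sum_distrib_left mult_ac)

lemma swap_sum: "(\<Sum>\<eta>\<in>UNIV. g (swap_cfg \<eta> x y)) = (\<Sum>\<eta>\<in>UNIV. (g \<eta> :: 'b::comm_monoid_add))"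
  by (rule sum.reindex_bij_witness[where i="\<lambda>\<eta>. swap_cfg \<eta> x y" and j="\<lambda>\<eta>. swap_cfg \<eta> x y"]) auto

lemma inner_ofreal_left: "inner (complex_of_real r * z) w = r * inner z w"
  by (simp add: inner_complex_def algebra_simps)
lemma inner_ofreal_right: "inner w (complex_of_real r * z) = r * inner w z"
  by (simp add: inner_complex_def algebra_simps)

lemma sum3_swap_r: "(\<Sum>z\<in>A. \<Sum>x\<in>B. \<Sum>y\<in>C. f z x y) = (\<Sum>x\<in>B. \<Sum>y\<in>C. \<Sum>z\<in>A. (f z x y :: real))"
  by (subst sum.swap, rule sum.cong[OF refl], rule sum.swap)

lemma Pop_herm_left: "(\<Sum>\<eta>\<in>UNIV. inner (Pop a b \<psi> \<eta>) (\<phi> \<eta>)) =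
   a * (\<Sum>\<eta>\<in>UNIV. inner (\<psi> \<eta>) (\<phi> \<eta>)) + (\<Sum>x\<in>UNIV. \<Sum>y\<in>UNIV. b x y * (\<Sum>\<eta>\<in>UNIV. inner (\<psi> (swap_cfg \<eta> x y)) (\<phi> \<eta>)))"
proof -
  have "(\<Sum>\<eta>\<in>UNIV. inner (Pop a b \<psi> \<eta>) (\<phi> \<eta>)) = (\<Sum>\<eta>\<in>UNIV. a * inner (\<psi> \<eta>) (\<phi> \<eta>) +
      (\<Sum>x\<in>UNIV. \<Sum>y\<in>UNIV. b x y * inner (\<psi> (swap_cfg \<eta> x y)) (\<phi> \<eta>)))"
    by (intro sum.cong refl) (simp add: Pop_def inner_add_left inner_sum_left inner_ofreal_left)
  also have "\<dots> = a * (\<Sum>\<eta>\<in>UNIV. inner (\<psi> \<eta>) (\<phi> \<eta>)) + (\<Sum>\<eta>\<in>UNIV. \<Sum>x\<in>UNIV. \<Sum>y\<in>UNIV. b x y * inner (\<psi> (swap_cfg \<eta> x y)) (\<phi> \<eta>))"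
    by (simp only: sum.distrib sum_distrib_left)
  also have "\<dots> = a * (\<Sum>\<eta>\<in>UNIV. inner (\<psi> \<eta>) (\<phi> \<eta>)) + (\<Sum>x\<in>UNIV. \<Sum>y\<in>UNIV. \<Sum>\<eta>\<in>UNIV. b x y * inner (\<psi> (swap_cfg \<eta> x y)) (\<phi> \<eta>))"
    by (subst sum3_swap_r) (rule refl)
  also have "\<dots> = a * (\<Sum>\<eta>\<in>UNIV. inner (\<psi> \<eta>) (\<phi> \<eta>)) + (\<Sum>x\<in>UNIV. \<Sum>y\<in>UNIV. b x y * (\<Sum>\<eta>\<in>UNIV. inner (\<psi> (swap_cfg \<eta> x y)) (\<phi> \<eta>)))"
    by (simp only: sum_distrib_left)
  finally show ?thesis .
qed

lemma Pop_herm_right: "(\<Sum>\<eta>\<in>UNIV. inner (\<psi> \<eta>) (Pop a b \<phi> \<eta>)) =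
   a * (\<Sum>\<eta>\<in>UNIV. inner (\<psi> \<eta>) (\<phi> \<eta>)) + (\<Sum>x\<in>UNIV. \<Sum>y\<in>UNIV. b x y * (\<Sum>\<eta>\<in>UNIV. inner (\<psi> \<eta>) (\<phi> (swap_cfg \<eta> x y))))"
proof -
  have "(\<Sum>\<eta>\<in>UNIV. inner (\<psi> \<eta>) (Pop a b \<phi> \<eta>)) = (\<Sum>\<eta>\<in>UNIV. a * inner (\<psi> \<eta>) (\<phi> \<eta>) +
      (\<Sum>x\<in>UNIV. \<Sum>y\<in>UNIV. b x y * inner (\<psi> \<eta>) (\<phi> (swap_cfg \<eta> x y))))"
    by (intro sum.cong refl) (simp add: Pop_def inner_add_right inner_sum_right inner_ofreal_right)
  also have "\<dots> = a * (\<Sum>\<eta>\<in>UNIV. inner (\<psi> \<eta>) (\<phi> \<eta>)) + (\<Sum>\<eta>\<in>UNIV. \<Sum>x\<in>UNIV. \<Sum>y\<in>UNIV. b x y * inner (\<psi> \<eta>) (\<phi> (swap_cfg \<eta> x y)))"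
    by (simp only: sum.distrib sum_distrib_left)
  also have "\<dots> = a * (\<Sum>\<eta>\<in>UNIV. inner (\<psi> \<eta>) (\<phi> \<eta>)) + (\<Sum>x\<in>UNIV. \<Sum>y\<in>UNIV. \<Sum>\<eta>\<in>UNIV. b x y * inner (\<psi> \<eta>) (\<phi> (swap_cfg \<eta> x y)))"
    by (subst sum3_swap_r) (rule refl)
  also have "\<dots> = a * (\<Sum>\<eta>\<in>UNIV. inner (\<psi> \<eta>) (\<phi> \<eta>)) + (\<Sum>x\<in>UNIV. \<Sum>y\<in>UNIV. b x y * (\<Sum>\<eta>\<in>UNIV. inner (\<psi> \<eta>) (\<phi> (swap_cfg \<eta> x y))))"
    by (simp only: sum_distrib_left)
  finally show ?thesis .
qed

lemma Pop_herm: "(\<Sum>\<eta>\<in>UNIV. inner (Pop a b \<psi> \<eta>) (\<phi> \<eta>)) = (\<Sum>\<eta>\<in>UNIV. inner (\<psi> \<eta>) (Pop a b \<phi> \<eta>))"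
proof -
  have "(\<Sum>\<eta>\<in>UNIV. inner (\<psi> (swap_cfg \<eta> x y)) (\<phi> \<eta>)) = (\<Sum>\<eta>\<in>UNIV. inner (\<psi> \<eta>) (\<phi> (swap_cfg \<eta> x y)))" for x y
    using swap_sum[of "\<lambda>\<eta>. inner (\<psi> \<eta>) (\<phi> (swap_cfg \<eta> x y))" x y] by simp
  then show ?thesis unfolding Pop_herm_left Pop_herm_right by simp
qed

lemma opv_linear: "linear (opv (Pop a b :: ('v::finite) state \<Rightarrow> 'v state))"
proof (rule linearI)
  fix u v :: "complex^('v \<Rightarrow> bool)"
  show "opv (Pop a b) (u + v) = opv (Pop a b) u + opv (Pop a b) v"
    by (simp add: opv_def vv_def Pop_add vec_eq_iff)
next
  fix c :: real and u :: "complex^('v \<Rightarrow> bool)"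
  have "(\<lambda>\<eta>. (c *\<^sub>R u) $ \<eta>) = (\<lambda>\<eta>. complex_of_real c * u $ \<eta>)"
    by (rule ext, subst vector_scaleR_component) (rule scaleR_conv_of_real)
  then show "opv (Pop a b) (c *\<^sub>R u) = c *\<^sub>R opv (Pop a b) u"
    by (simp add: opv_def vv_def Pop_scale vec_eq_iff) (simp add: scaleR_conv_of_real)
qed

lemma opv_sym: "\<forall>u v. inner (opv (Pop a b) u) v = inner u (opv (Pop a b) (v :: complex^('v::finite \<Rightarrow> bool)))"
proof (intro allI)
  fix u v :: "complex^('v \<Rightarrow> bool)"
  have "inner (opv (Pop a b) u) v = inner (vv (Pop a b (\<lambda>\<eta>. u $ \<eta>))) (vv (\<lambda>\<eta>. v $ \<eta>))"
    unfolding opv_def vv_of_nth ..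
  also have "\<dots> = inner (vv (\<lambda>\<eta>. u $ \<eta>)) (vv (Pop a b (\<lambda>\<eta>. v $ \<eta>)))"
    unfolding vv_inner by (rule Pop_herm)
  also have "\<dots> = inner u (opv (Pop a b) v)" unfolding opv_def vv_of_nth ..
  finally show "inner (opv (Pop a b) u) v = inner u (opv (Pop a b) v)" .
qed

lemma opv_eig: "Pop a b \<psi> = (\<lambda>\<eta>. complex_of_real E * \<psi> \<eta>) \<Longrightarrow> opv (Pop a b) (vv \<psi>) = E *\<^sub>R vv \<psi>"
  by (simp add: opv_def vv_def vec_eq_iff) (simp add: scaleR_conv_of_real)

lemma Pop_finite_eigs:
  "finite {E::real. \<exists>\<psi>::('v::finite) state. \<psi> \<noteq> (\<lambda>_. 0) \<and> Pop a b \<psi> = (\<lambda>\<eta>. complex_of_real E * \<psi> \<eta>)}"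
proof (rule finite_subset[OF _ finite_eigs[OF opv_sym[of a b]]])
  show "{E::real. \<exists>\<psi>::'v state. \<psi> \<noteq> (\<lambda>_. 0) \<and> Pop a b \<psi> = (\<lambda>\<eta>. complex_of_real E * \<psi> \<eta>)}
     \<subseteq> {\<mu>. \<exists>x. x \<noteq> 0 \<and> opv (Pop a b) x = \<mu> *\<^sub>R x}"
  proof clarify
    fix E and \<psi> :: "'v state" assume "\<psi> \<noteq> (\<lambda>_. 0)" "Pop a b \<psi> = (\<lambda>\<eta>. complex_of_real E * \<psi> \<eta>)"
    then show "\<exists>x. x \<noteq> 0 \<and> opv (Pop a b) x = E *\<^sub>R x"
      using opv_eig vv_zero_iff by metis
  qed
qed

lemma Pop_exists_eig:
  fixes P :: "('v::finite) state \<Rightarrow> bool"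
  assumes add: "\<And>f g. P f \<Longrightarrow> P g \<Longrightarrow> P (\<lambda>\<eta>. f \<eta> + g \<eta>)"
    and sc: "\<And>c f. P f \<Longrightarrow> P (\<lambda>\<eta>. complex_of_real c * f \<eta>)"
    and z: "P (\<lambda>_. 0)" and inv: "\<And>f. P f \<Longrightarrow> P (Pop a b f)"
    and p0: "P \<psi>0" "\<psi>0 \<noteq> (\<lambda>_. 0)"
  shows "\<exists>\<psi>. P \<psi> \<and> \<psi> \<noteq> (\<lambda>_. 0) \<and> (\<exists>\<mu>. Pop a b \<psi> = (\<lambda>\<eta>. complex_of_real \<mu> * \<psi> \<eta>))"
proof -
  define W where "W = {v. P (\<lambda>\<eta>. v $ \<eta>)}"
  have "subspace W" unfolding subspace_def
  proof (intro conjI ballI allI)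
    have h0: "vec_nth (0::complex^('v \<Rightarrow> bool)) = (\<lambda>_. 0)" by (rule ext) simp
    show "0 \<in> W" unfolding W_def mem_Collect_eq h0 by (rule z)
  next
    fix x y assume "x \<in> W" "y \<in> W"
    then have "P (\<lambda>\<eta>. x $ \<eta> + y $ \<eta>)" unfolding W_def using add by simp
    moreover have "vec_nth (x + y) = (\<lambda>\<eta>. x $ \<eta> + y $ \<eta>)" by (rule ext) simp
    ultimately show "x + y \<in> W" unfolding W_def by simp
  next
    fix c :: real and x assume "x \<in> W"
    then have "P (\<lambda>\<eta>. complex_of_real c * x $ \<eta>)" unfolding W_def using sc by simp
    moreover have hc: "vec_nth (c *\<^sub>R x) = (\<lambda>\<eta>. complex_of_real c * x $ \<eta>)"
      by (rule ext, subst vector_scaleR_component) (rule scaleR_conv_of_real)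
    ultimately show "c *\<^sub>R x \<in> W" unfolding W_def mem_Collect_eq hc by blast
  qed
  moreover have "\<forall>x\<in>W. opv (Pop a b) x \<in> W" unfolding W_def opv_def using inv by simp
  moreover have "vv \<psi>0 \<in> W" "vv \<psi>0 \<noteq> 0" unfolding W_def using p0 vv_zero_iff by auto
  ultimately obtain x where x: "x \<in> W" "x \<noteq> 0" "\<exists>\<mu>. opv (Pop a b) x = \<mu> *\<^sub>R x"
    using exists_eig[OF opv_linear opv_sym] by blast
  then obtain \<mu> where \<mu>: "opv (Pop a b) x = \<mu> *\<^sub>R x" by blast
  have "Pop a b (\<lambda>\<eta>. x $ \<eta>) = (\<lambda>\<eta>. opv (Pop a b) x $ \<eta>)" unfolding opv_def by simp
  also have "\<dots> = (\<lambda>\<eta>. complex_of_real \<mu> * x $ \<eta>)" unfolding \<mu> by simp (simp add: scaleR_conv_of_real)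
  finally have "Pop a b (\<lambda>\<eta>. x $ \<eta>) = (\<lambda>\<eta>. complex_of_real \<mu> * x $ \<eta>)" .
  moreover have "P (\<lambda>\<eta>. x $ \<eta>)" using x(1) unfolding W_def by simp
  moreover have "(\<lambda>\<eta>. x $ \<eta>) \<noteq> (\<lambda>_. 0)" using x(2) by (auto simp: vec_eq_iff fun_eq_iff)
  ultimately show ?thesis by blast
qed


lemma Pop_zero: "Pop a b (\<lambda>_. 0) = (\<lambda>_. 0)" by (simp add: Pop_def)

lemma Pop_const_cfg: "Pop a b \<psi> (\<lambda>_. c) = complex_of_real (a + (\<Sum>x\<in>UNIV. \<Sum>y\<in>UNIV. b x y)) * \<psi> (\<lambda>_. c)"
  by (simp add: Pop_def sum_distrib_right distrib_right)

lemma heis_kill: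
  fixes \<psi> :: "('v::finite) state"
  assumes J0: "\<forall>x. J x x = 0" and sec: "sector n \<psi>" and n: "n = 0 \<or> n = CARD('v)"
    and nz: "\<psi> \<noteq> (\<lambda>_. 0)" and eig: "heis_ham J \<psi> = (\<lambda>\<eta>. complex_of_real l * \<psi> \<eta>)"
  shows "l = 0"
proof -
  obtain \<eta> where \<eta>: "\<psi> \<eta> \<noteq> 0" using nz by auto
  then have "kc \<eta> = n" using sec unfolding sector_def by blast
  then obtain c where c: "\<eta> = (\<lambda>_. c)" using n kc_all kc_none by metis
  have "(\<Sum>x\<in>UNIV. \<Sum>y\<in>UNIV. J x y / 4) + (\<Sum>x\<in>UNIV. \<Sum>y\<in>(UNIV::'v set). - J x y / 4) = 0"
    by (simp add: sum_negf)
  then have "heis_ham J \<psi> \<eta> = 0" unfolding heis_Pop[where J=J, OF J0] c Pop_const_cfg by simp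
  then have "complex_of_real l * \<psi> \<eta> = 0" using eig by metis
  then show "l = 0" using \<eta> by simp
qed

lemma Pop_mult_kc: "Pop a b (\<lambda>\<eta>. h (kc \<eta>) * \<psi> \<eta>) = (\<lambda>\<eta>. h (kc \<eta>) * Pop a b \<psi> \<eta>)"
  by (simp add: Pop_def fun_eq_iff distrib_left sum_distrib_left mult_ac)

lemma casimir_DR_fun: "casimir \<psi> = (\<lambda>\<eta>. Dop (Rop \<psi>) \<eta> + complex_of_real (mv \<eta> ^ 2 + mv \<eta>) * \<psi> \<eta>)"
  using casimir_DR by blast

lemma mv_kc: "complex_of_real (mv \<eta> ^ 2 + mv \<eta>) = (\<lambda>k. complex_of_real ((real k - real CARD('v)/2)^2 + (real k - real CARD('v)/2))) (kc (\<eta>::'v::finite \<Rightarrow> bool))"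
  by (simp add: mv_def)

lemma Pop_casimir: "Pop a b (casimir \<psi>) = casimir (Pop a b (\<psi> :: ('v::finite) state))"
proof -
  define h where "h = (\<lambda>k. complex_of_real ((real k - real CARD('v)/2)^2 + (real k - real CARD('v)/2)))"
  have "Pop a b (casimir \<psi>) = Pop a b (\<lambda>\<eta>. Dop (Rop \<psi>) \<eta> + h (kc \<eta>) * \<psi> \<eta>)"
    unfolding casimir_DR_fun h_def mv_kc ..
  also have "\<dots> = (\<lambda>\<eta>. Dop (Rop (Pop a b \<psi>)) \<eta> + h (kc \<eta>) * Pop a b \<psi> \<eta>)"
    unfolding Pop_add Pop_mult_kc Rop_Pop Dop_Pop ..
  also have "\<dots> = casimir (Pop a b \<psi>)"
    unfolding casimir_DR_fun h_def mv_kc ..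
  finally show ?thesis .
qed

lemma Rop_iter_eig: "Pop a b \<phi> = (\<lambda>\<eta>. c * \<phi> \<eta>) \<Longrightarrow> Pop a b ((Rop ^^ j) \<phi>) = (\<lambda>\<eta>. c * (Rop ^^ j) \<phi> \<eta>)"
  by (metis Rop_iter_Pop Rop_iter_scale)
lemma Dop_iter_eig: "Pop a b \<phi> = (\<lambda>\<eta>. c * \<phi> \<eta>) \<Longrightarrow> Pop a b ((Dop ^^ j) \<phi>) = (\<lambda>\<eta>. c * (Dop ^^ j) \<phi> \<eta>)"
  by (metis Dop_iter_Pop Dop_iter_scale)

lemma Pop_Re: "Pop a b (\<lambda>\<eta>. complex_of_real (Re (\<psi> \<eta>))) = (\<lambda>\<eta>. complex_of_real (Re (Pop a b \<psi> \<eta>)))"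
  by (simp add: Pop_def fun_eq_iff complex_eq_iff)
lemma Pop_Im: "Pop a b (\<lambda>\<eta>. complex_of_real (Im (\<psi> \<eta>))) = (\<lambda>\<eta>. complex_of_real (Im (Pop a b \<psi> \<eta>)))"
  by (simp add: Pop_def fun_eq_iff complex_eq_iff)

lemma heis_ssep:
  assumes J0: "\<forall>x. J x x = 0"
  shows "heis_ham J (\<lambda>\<eta>. complex_of_real (f \<eta>)) = (\<lambda>\<eta>. complex_of_real (ssep_gen (\<lambda>x y. J x y / 2) f \<eta>))"
proof
  fix \<eta>
  have "ssep_gen (\<lambda>x y. J x y / 2) f \<eta> = (\<Sum>x\<in>UNIV. \<Sum>y\<in>UNIV. J x y / 4 * f \<eta> + (- J x y / 4) * f (swap_cfg \<eta> x y))"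
    unfolding ssep_gen_def sum_distrib_left by (intro sum.cong refl) (simp add: algebra_simps)
  also have "\<dots> = (\<Sum>x\<in>UNIV. \<Sum>y\<in>UNIV. J x y / 4) * f \<eta> + (\<Sum>x\<in>UNIV. \<Sum>y\<in>UNIV. (- J x y / 4) * f (swap_cfg \<eta> x y))"
    by (simp only: sum.distrib sum_distrib_right)
  finally show "heis_ham J (\<lambda>\<eta>. complex_of_real (f \<eta>)) \<eta> = complex_of_real (ssep_gen (\<lambda>x y. J x y / 2) f \<eta>)"
    unfolding heis_Pop[where J=J, OF J0] Pop_def by simp
qed

lemma real_extract:
  fixes \<psi> :: "('v::finite) state"
  assumes J0: "\<forall>x. J x x = 0" and sec: "sector n \<psi>" and nz: "\<psi> \<noteq> (\<lambda>_. 0)"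
    and eig: "heis_ham J \<psi> = (\<lambda>\<eta>. complex_of_real l * \<psi> \<eta>)"
  shows "\<exists>f\<in>n_particle_space n. f \<noteq> (\<lambda>_. 0) \<and> ssep_gen (\<lambda>x y. J x y / 2) f = (\<lambda>\<eta>. l * f \<eta>)"
proof -
  let ?c = "\<lambda>x y. J x y / 2"
  have eigP: "Pop (\<Sum>x\<in>UNIV. \<Sum>y\<in>UNIV. J x y / 4) (\<lambda>x y. - J x y / 4) \<psi> = (\<lambda>\<eta>. complex_of_real l * \<psi> \<eta>)"
    using eig unfolding heis_Pop[where J=J, OF J0] .
  then have pe: "\<And>\<eta>. Pop (\<Sum>x\<in>UNIV. \<Sum>y\<in>UNIV. J x y / 4) (\<lambda>x y. - J x y / 4) \<psi> \<eta> = complex_of_real l * \<psi> \<eta>"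
    by metis
  have good: "f \<in> n_particle_space n \<and> ssep_gen ?c f = (\<lambda>\<eta>. l * f \<eta>)"
    if f: "f = (\<lambda>\<eta>. Re (\<psi> \<eta>)) \<or> f = (\<lambda>\<eta>. Im (\<psi> \<eta>))" for f
  proof
    show "f \<in> n_particle_space n" unfolding n_particle_space_def
    proof (clarify)
      fix \<eta> assume "f \<eta> \<noteq> 0"
      then have "\<psi> \<eta> \<noteq> 0" using f by auto
      then show "card {x. \<eta> x} = n" using sec unfolding sector_def kc_def by blast
    qed
    have "(\<lambda>\<eta>. complex_of_real (ssep_gen ?c f \<eta>)) = heis_ham J (\<lambda>\<eta>. complex_of_real (f \<eta>))"
      unfolding heis_ssep[where J=J, OF J0] ..
    also have "\<dots> = (\<lambda>\<eta>. complex_of_real (l * f \<eta>))"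
      using f
    proof
      assume f: "f = (\<lambda>\<eta>. Re (\<psi> \<eta>))"
      show ?thesis unfolding f heis_Pop[where J=J, OF J0] Pop_Re pe by simp
    next
      assume f: "f = (\<lambda>\<eta>. Im (\<psi> \<eta>))"
      show ?thesis unfolding f heis_Pop[where J=J, OF J0] Pop_Im pe by simp
    qed
    finally have h: "(\<lambda>\<eta>. complex_of_real (ssep_gen ?c f \<eta>)) = (\<lambda>\<eta>. complex_of_real (l * f \<eta>))" .
    show "ssep_gen ?c f = (\<lambda>\<eta>. l * f \<eta>)"
    proof
      fix \<eta> show "ssep_gen ?c f \<eta> = l * f \<eta>" using fun_cong[OF h, of \<eta>] by (simp only: of_real_eq_iff)
    qed
  qed
  show ?thesis
  proof (cases "(\<lambda>\<eta>. Re (\<psi> \<eta>)) = (\<lambda>_. 0)")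
    case True
    then have "(\<lambda>\<eta>. Im (\<psi> \<eta>)) \<noteq> (\<lambda>_. 0)" using nz by (auto simp: fun_eq_iff complex_eq_iff)
    then show ?thesis using good by blast
  next
    case False
    then show ?thesis using good by blast
  qed
qed

lemma real_embed:
  fixes f :: "('v::finite \<Rightarrow> bool) \<Rightarrow> real"
  assumes J0: "\<forall>x. J x x = 0" and f: "f \<in> n_particle_space n" "f \<noteq> (\<lambda>_. 0)"
    and eig: "ssep_gen (\<lambda>x y. J x y / 2) f = (\<lambda>\<eta>. l * f \<eta>)"
  shows "sector n (\<lambda>\<eta>. complex_of_real (f \<eta>)) \<and> (\<lambda>\<eta>. complex_of_real (f \<eta>)) \<noteq> (\<lambda>_. 0)
     \<and> heis_ham J (\<lambda>\<eta>. complex_of_real (f \<eta>)) = (\<lambda>\<eta>. complex_of_real l * complex_of_real (f \<eta>))"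
  using f unfolding heis_ssep[where J=J, OF J0] eig sector_def n_particle_space_def kc_def
  by (auto simp: fun_eq_iff)

lemma sq_inj: "0 \<le> (x::real) \<Longrightarrow> 0 \<le> y \<Longrightarrow> x * (x + 1) = y * (y + 1) \<Longrightarrow> x = y"
proof -
  assume "0 \<le> x" "0 \<le> y" "x * (x + 1) = y * (y + 1)"
  then have "(x - y) * (x + y + 1) = 0" by (simp add: algebra_simps)
  moreover have "x + y + 1 \<noteq> 0" using \<open>0 \<le> x\<close> \<open>0 \<le> y\<close> by simp
  ultimately show "x = y" by simp
qed

lemma Dop_zero_spin:
  fixes \<psi> :: "('v::finite) state"
  assumes sec: "sector 1 \<psi>" and D: "Dop \<psi> = (\<lambda>_. 0)"
  shows "casimir \<psi> = (\<lambda>\<eta>. complex_of_real ((real CARD('v)/2 - 1) * (real CARD('v)/2 - 1 + 1)) * \<psi> \<eta>)"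
proof
  fix \<eta> :: "'v \<Rightarrow> bool"
  have r0: "Rop (\<lambda>_. 0) \<eta> = 0" by (simp add: Rop_def upo_def)
  show "casimir \<psi> \<eta> = complex_of_real ((real CARD('v)/2 - 1) * (real CARD('v)/2 - 1 + 1)) * \<psi> \<eta>"
  proof (cases "\<psi> \<eta> = 0")
    case True
    then show ?thesis unfolding casimir_RD D r0 by simp
  next
    case False
    then have "kc \<eta> = 1" using sec unfolding sector_def by blast
    then have e: "mv \<eta> ^ 2 - mv \<eta> = (real CARD('v)/2 - 1) * (real CARD('v)/2 - 1 + 1)"
      unfolding mv_def by (simp add: power2_eq_square algebra_simps)
    show ?thesis unfolding casimir_RD D r0 e by simp
  qed
qed

lemma proj_nz: "\<psi> \<noteq> (\<lambda>_. 0) \<Longrightarrow> \<exists>k. proj k \<psi> \<noteq> (\<lambda>_. 0)"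
proof -
  assume "\<psi> \<noteq> (\<lambda>_. 0)"
  then obtain \<eta> where "\<psi> \<eta> \<noteq> 0" by auto
  then have "proj (kc \<eta>) \<psi> \<eta> \<noteq> 0" by (simp add: proj_def)
  then show ?thesis by (metis)
qed


lemma sector_add: "sector m f \<Longrightarrow> sector m g \<Longrightarrow> sector m (\<lambda>\<eta>. f \<eta> + g \<eta>)"
  unfolding sector_def by (metis add.right_neutral)
lemma sector_scale: "sector m f \<Longrightarrow> sector m (\<lambda>\<eta>. c * f \<eta>)"
  unfolding sector_def by simp
lemma sector_zero: "sector m (\<lambda>_. 0)"
  unfolding sector_def by simp
lemma Dop_add: "Dop (\<lambda>\<eta>. f \<eta> + g \<eta>) = (\<lambda>\<eta>. Dop f \<eta> + Dop g \<eta>)"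
  unfolding Dop_def dno_def by (auto simp: fun_eq_iff sum.distrib[symmetric] intro!: sum.cong)
lemma Dop_zero: "Dop (\<lambda>_. 0) = (\<lambda>_. 0)"
  unfolding Dop_def dno_def by simp
lemma proj_scale: "proj k (\<lambda>\<eta>. c * \<psi> \<eta>) = (\<lambda>\<eta>. c * proj k \<psi> \<eta>)"
  by (simp add: proj_def fun_eq_iff)

lemma b_eq:
  assumes "a + b = N" "a \<le> m" "m \<le> b" "2 \<le> N"
    "(real b - real N/2) * (real b - real N/2 + 1) = (real N/2 - 1) * (real N/2 - 1 + 1)"
  shows "b = N - 1 \<and> a = 1"
proof -
  have "real b - real N/2 \<ge> 0" using assms(1-3) by linarith
  moreover have "real N/2 - 1 \<ge> 0" using assms(4) by simp
  ultimately have "real b - real N/2 = real N/2 - 1" using sq_inj assms(5) by blast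
  then have "real b = real N - 1" by simp
  then have "b = N - 1" using assms(4) by linarith
  then show ?thesis using assms(1,4) by simp
qed

lemma b_max:
  assumes "a + b = N" "a \<le> m" "m \<le> b"
    "(real b - real N/2) * (real b - real N/2 + 1) = (real N/2) * (real N/2 + 1)"
  shows "b = N"
proof -
  have "real b - real N/2 \<ge> 0" using assms(1-3) by linarith
  moreover have "real N/2 \<ge> 0" by simp
  ultimately have "real b - real N/2 = real N/2" using sq_inj assms(4) by blast
  then show "b = N" by linarith
qed

definition Ec :: "('v::finite \<Rightarrow> 'v \<Rightarrow> real) \<Rightarrow> nat \<Rightarrow> real \<Rightarrow> bool" where
  "Ec J m l \<longleftrightarrow> (\<exists>\<psi>::'v state. sector m \<psi> \<and> \<psi> \<noteq> (\<lambda>_. 0) \<and> heis_ham J \<psi> = (\<lambda>\<eta>. complex_of_real l * \<psi> \<eta>))"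

lemma ladder_H:
  fixes \<psi> :: "('v::finite) state"
  assumes J0: "\<forall>x. J x x = 0" and sec: "sector m \<psi>" and nz: "\<psi> \<noteq> (\<lambda>_. 0)"
    and eH: "heis_ham J \<psi> = (\<lambda>\<eta>. complex_of_real l * \<psi> \<eta>)"
    and eC: "casimir \<psi> = (\<lambda>\<eta>. complex_of_real \<mu> * \<psi> \<eta>)"
  shows "\<exists>a b. a \<le> m \<and> m \<le> b \<and> b \<le> CARD('v) \<and> a + b = CARD('v) \<and>
     \<mu> = (real b - real CARD('v)/2) * (real b - real CARD('v)/2 + 1) \<and> Ec J b l \<and> Ec J a l"
proof -
  obtain a b where ab: "a \<le> m" "m \<le> b" "b \<le> CARD('v)" "a + b = CARD('v)"
     "\<mu> = (real b - real CARD('v)/2) * (real b - real CARD('v)/2 + 1)"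
     "\<forall>j \<le> b - m. (Rop ^^ j) \<psi> \<noteq> (\<lambda>_. 0)" "\<forall>i \<le> m - a. (Dop ^^ i) \<psi> \<noteq> (\<lambda>_. 0)"
    using ladder[OF sec nz eC] by blast
  have eP: "Pop (\<Sum>x\<in>UNIV. \<Sum>y\<in>UNIV. J x y / 4) (\<lambda>x y. - J x y / 4) \<psi> = (\<lambda>\<eta>. complex_of_real l * \<psi> \<eta>)"
    using eH unfolding heis_Pop[where J=J, OF J0] .
  have "Ec J b l" unfolding Ec_def
  proof (intro exI conjI)
    show "sector b ((Rop ^^ (b - m)) \<psi>)" using Rop_iter_sector[OF sec, of "b - m"] ab(2) by simp
    show "(Rop ^^ (b - m)) \<psi> \<noteq> (\<lambda>_. 0)" using ab(6) by simp
    show "heis_ham J ((Rop ^^ (b - m)) \<psi>) = (\<lambda>\<eta>. complex_of_real l * (Rop ^^ (b - m)) \<psi> \<eta>)"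
      unfolding heis_Pop[where J=J, OF J0] by (rule Rop_iter_eig[OF eP])
  qed
  moreover have "Ec J a l" unfolding Ec_def
  proof (intro exI conjI)
    show "sector a ((Dop ^^ (m - a)) \<psi>)" using Dop_iter_sector[OF sec, of "m - a"] ab(1) by simp
    show "(Dop ^^ (m - a)) \<psi> \<noteq> (\<lambda>_. 0)" using ab(7) by simp
    show "heis_ham J ((Dop ^^ (m - a)) \<psi>) = (\<lambda>\<eta>. complex_of_real l * (Dop ^^ (m - a)) \<psi> \<eta>)"
      unfolding heis_Pop[where J=J, OF J0] by (rule Dop_iter_eig[OF eP])
  qed
  ultimately show ?thesis using ab by blast
qed

lemma Ec_kill: fixes J :: "'v::finite \<Rightarrow> 'v \<Rightarrow> real"
  shows "\<forall>x. J x x = 0 \<Longrightarrow> Ec J m l \<Longrightarrow> m = 0 \<or> m = CARD('v) \<Longrightarrow> l = 0"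
proof -
  assume J0: "\<forall>x. J x x = 0" and E: "Ec J m l" and m: "m = 0 \<or> m = CARD('v)"
  then obtain \<psi> :: "'v state" where "sector m \<psi>" "\<psi> \<noteq> (\<lambda>_. 0)" "heis_ham J \<psi> = (\<lambda>\<eta>. complex_of_real l * \<psi> \<eta>)"
    unfolding Ec_def by blast
  then show "l = 0" using heis_kill[where J=J, OF J0 _ m] by blast
qed

lemma proj_eig:
  fixes \<psi> :: "('v::finite) state"
  assumes J0: "\<forall>x. J x x = 0"
    and eH: "heis_ham J \<psi> = (\<lambda>\<eta>. complex_of_real l * \<psi> \<eta>)"
    and eC: "casimir \<psi> = (\<lambda>\<eta>. complex_of_real \<mu> * \<psi> \<eta>)"
  shows "heis_ham J (proj k \<psi>) = (\<lambda>\<eta>. complex_of_real l * proj k \<psi> \<eta>)"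
    "casimir (proj k \<psi>) = (\<lambda>\<eta>. complex_of_real \<mu> * proj k \<psi> \<eta>)"
  using eH eC unfolding heis_Pop[where J=J, OF J0] casimir_Pop
  by (simp_all add: Pop_proj proj_scale)


theorem proposition2:
  fixes J :: "'v::finite \<Rightarrow> 'v \<Rightarrow> real"
  assumes J_sym: "\<forall>x y. J x y = J y x"
    and J_nonneg: "\<forall>x y. 0 \<le> J x y"
    and J_irrefl: "\<forall>x. J x x = 0"
    and connected: "\<forall>x y. (x, y) \<in> {(u, v). 0 < J u v}\<^sup>*"
    and foel: "FOEL (heis_ham J)"
  shows "\<forall>n. 1 \<le> n \<and> n \<le> card (UNIV :: 'v set) - 1 \<longrightarrow>
           ssep_gap (\<lambda>x y. J x y / 2) n = ssep_gap (\<lambda>x y. J x y / 2) 1"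
proof (intro allI impI)
  fix n assume nr: "1 \<le> n \<and> n \<le> card (UNIV :: 'v set) - 1"
  note J0 = J_irrefl
  have N2: "2 \<le> CARD('v)" using nr by linarith
  define c where "c = (\<lambda>x y. J x y / 2)"
  define A where "A m = {l. 0 < l \<and> (\<exists>f\<in>n_particle_space m. f \<noteq> (\<lambda>_. 0) \<and> ssep_gen c f = (\<lambda>\<eta>. l * f \<eta>))}" for m
  have gap: "ssep_gap c m = Min (A m)" for m unfolding ssep_gap_def A_def ..
  define hA where "hA = (\<Sum>x\<in>UNIV. \<Sum>y\<in>UNIV. J x y / 4)"
  define hB where "hB = (\<lambda>x y. - J x y / 4)"
  have HP: "heis_ham J \<psi> = Pop hA hB \<psi>" for \<psi> unfolding hA_def hB_def by (rule heis_Pop[where J=J, OF J0])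
  define ca where "ca = cas0 (real CARD('v))"
  define cb where "cb = (\<lambda>(_::'v) (_::'v). 1/2::real)"
  have CP: "casimir \<psi> = Pop ca cb \<psi>" for \<psi> :: "'v state" unfolding ca_def cb_def by (rule casimir_Pop)
  have A_iff: "l \<in> A m \<longleftrightarrow> 0 < l \<and> Ec J m l" for m l
  proof
    assume "l \<in> A m"
    then obtain f where f: "0 < l" "f \<in> n_particle_space m" "f \<noteq> (\<lambda>_. 0)" "ssep_gen c f = (\<lambda>\<eta>. l * f \<eta>)"
      unfolding A_def by blast
    then show "0 < l \<and> Ec J m l" unfolding Ec_def c_def using real_embed[where J=J, OF J0, of f m l] by blast
  next
    assume "0 < l \<and> Ec J m l"
    then obtain \<psi> :: "'v state" where "0 < l" "sector m \<psi>" "\<psi> \<noteq> (\<lambda>_. 0)" "heis_ham J \<psi> = (\<lambda>\<eta>. complex_of_real l * \<psi> \<eta>)"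
      unfolding Ec_def by blast
    then show "l \<in> A m" unfolding A_def c_def using real_extract[where J=J, OF J0] by blast
  qed
  define EIG where "EIG = {E::real. \<exists>\<psi>::'v state. \<psi> \<noteq> (\<lambda>_. 0) \<and> Pop hA hB \<psi> = (\<lambda>\<eta>. complex_of_real E * \<psi> \<eta>)}"
  have finEIG: "finite EIG" unfolding EIG_def by (rule Pop_finite_eigs)
  have finA: "finite (A m)" for m
  proof (rule finite_subset[OF _ finEIG])
    show "A m \<subseteq> EIG" unfolding EIG_def using A_iff unfolding Ec_def HP by blast
  qed
  define SP where "SP S = {E. \<exists>\<psi>\<in>(spin_space S :: 'v state set). \<psi> \<noteq> (\<lambda>_. 0) \<and> heis_ham J \<psi> = (\<lambda>\<eta>. complex_of_real E * \<psi> \<eta>)}" for S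
  have ME: "min_energy (heis_ham J) S = Min (SP S)" for S unfolding min_energy_def SP_def ..
  have finSP: "finite (SP S)" for S
  proof (rule finite_subset[OF _ finEIG])
    show "SP S \<subseteq> EIG" unfolding EIG_def SP_def HP by blast
  qed
  have spin_iff: "\<psi> \<in> spin_space S \<longleftrightarrow> casimir \<psi> = (\<lambda>\<eta>. complex_of_real (S * (S + 1)) * \<psi> \<eta>)" for \<psi> :: "'v state" and S
    unfolding spin_space_def by simp
  define S1 where "S1 = real CARD('v) / 2 - 1"
  define Sm where "Sm = real CARD('v) / 2"
  have S1nn: "0 \<le> S1" unfolding S1_def using N2 by simp
  have S1Sm: "S1 < Sm" unfolding S1_def Sm_def by simp
  have G: "Ec J 1 E" if h: "\<psi> \<in> spin_space S1" "\<psi> \<noteq> (\<lambda>_. 0)" "heis_ham J \<psi> = (\<lambda>\<eta>. complex_of_real E * \<psi> \<eta>)" for \<psi> E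
  proof -
    obtain k where k: "proj k \<psi> \<noteq> (\<lambda>_. 0)" using proj_nz[OF h(2)] by blast
    have eC: "casimir \<psi> = (\<lambda>\<eta>. complex_of_real (S1 * (S1 + 1)) * \<psi> \<eta>)" using h(1) spin_iff by blast
    obtain a b where ab: "a \<le> k" "k \<le> b" "b \<le> CARD('v)" "a + b = CARD('v)"
      "S1 * (S1 + 1) = (real b - real CARD('v)/2) * (real b - real CARD('v)/2 + 1)" "Ec J a E"
      using ladder_H[where J=J, OF J0 proj_sector k proj_eig(1)[where J=J, OF J0 h(3) eC] proj_eig(2)[where J=J, OF J0 h(3) eC]] by blast
    have "b = CARD('v) - 1 \<and> a = 1" using b_eq[OF ab(4,1,2) N2] ab(5) unfolding S1_def by simp
    then show ?thesis using ab(6) by simp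
  qed
  have Gm: "E = 0" if h: "\<psi> \<in> spin_space Sm" "\<psi> \<noteq> (\<lambda>_. 0)" "heis_ham J \<psi> = (\<lambda>\<eta>. complex_of_real E * \<psi> \<eta>)" for \<psi> E
  proof -
    obtain k where k: "proj k \<psi> \<noteq> (\<lambda>_. 0)" using proj_nz[OF h(2)] by blast
    have eC: "casimir \<psi> = (\<lambda>\<eta>. complex_of_real (Sm * (Sm + 1)) * \<psi> \<eta>)" using h(1) spin_iff by blast
    obtain a b where ab: "a \<le> k" "k \<le> b" "b \<le> CARD('v)" "a + b = CARD('v)"
      "Sm * (Sm + 1) = (real b - real CARD('v)/2) * (real b - real CARD('v)/2 + 1)" "Ec J b E"
      using ladder_H[where J=J, OF J0 proj_sector k proj_eig(1)[where J=J, OF J0 h(3) eC] proj_eig(2)[where J=J, OF J0 h(3) eC]] by blast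
    have "b = CARD('v)" using b_max[OF ab(4,1,2)] ab(5) unfolding Sm_def by simp
    then show ?thesis using Ec_kill[where J=J, OF J0 ab(6)] by simp
  qed
  obtain u v :: 'v where uv: "u \<noteq> v"
  proof -
    have "1 < card (UNIV :: 'v set)" using N2 by simp
    then obtain u v :: 'v where "u \<noteq> v" using card_le_Suc0_iff_eq[of "UNIV :: 'v set"] by force
    then show ?thesis using that by blast
  qed
  define e where "e w = (\<lambda>x::'v. x = w)" for w
  have kc_e: "kc (e w) = 1" for w unfolding kc_def e_def by simp
  have e_inj: "e w = e w' \<longleftrightarrow> w = w'" for w w' unfolding e_def by (auto simp: fun_eq_iff)
  have e_upd: "(\<lambda>_. False)(z := True) = e z" for z unfolding e_def by (auto simp: fun_eq_iff)
  define \<psi>0 :: "'v state" where "\<psi>0 = (\<lambda>\<eta>. (if \<eta> = e u then 1 else 0) - (if \<eta> = e v then 1 else (0::complex)))"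
  have sec0: "sector 1 \<psi>0" unfolding sector_def \<psi>0_def using kc_e by (auto split: if_splits)
  have nz0: "\<psi>0 \<noteq> (\<lambda>_. 0)"
  proof
    assume "\<psi>0 = (\<lambda>_. 0)"
    then have "\<psi>0 (e u) = 0" by simp
    then show False unfolding \<psi>0_def using uv e_inj by auto
  qed
  have D0: "Dop \<psi>0 = (\<lambda>_. 0)"
  proof
    fix \<eta> :: "'v \<Rightarrow> bool"
    show "Dop \<psi>0 \<eta> = 0"
    proof (rule ccontr)
      assume ne: "Dop \<psi>0 \<eta> \<noteq> 0"
      then have "kc \<eta> = 0" using Dop_sector[OF sec0 ne] by simp
      then have \<eta>: "\<eta> = (\<lambda>_. False)" by (rule kc_none)
      have "Dop \<psi>0 \<eta> = (\<Sum>z\<in>UNIV. (if z = u then 1 else 0) - (if z = v then 1 else 0))"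
        unfolding \<eta> Dop_def dno_def \<psi>0_def e_upd e_inj by simp
      also have "\<dots> = 0" by (simp add: sum_subtractf)
      finally show False using ne by simp
    qed
  qed
  have "\<exists>\<omega>. (sector 1 \<omega> \<and> Dop \<omega> = (\<lambda>_. 0)) \<and> \<omega> \<noteq> (\<lambda>_. 0) \<and> (\<exists>\<mu>. Pop hA hB \<omega> = (\<lambda>\<eta>. complex_of_real \<mu> * \<omega> \<eta>))"
  proof (rule Pop_exists_eig[where P="\<lambda>\<omega>. sector 1 \<omega> \<and> Dop \<omega> = (\<lambda>_. 0)"])
    show "\<And>f g. sector 1 f \<and> Dop f = (\<lambda>_. 0) \<Longrightarrow> sector 1 g \<and> Dop g = (\<lambda>_. 0) \<Longrightarrow>
        sector 1 (\<lambda>\<eta>. f \<eta> + g \<eta>) \<and> Dop (\<lambda>\<eta>. f \<eta> + g \<eta>) = (\<lambda>_. 0)"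
      by (simp add: sector_add Dop_add)
    show "\<And>c f. sector 1 f \<and> Dop f = (\<lambda>_. 0) \<Longrightarrow>
        sector 1 (\<lambda>\<eta>. complex_of_real c * f \<eta>) \<and> Dop (\<lambda>\<eta>. complex_of_real c * f \<eta>) = (\<lambda>_. 0)"
      by (simp add: sector_scale Dop_scale)
    show "sector 1 (\<lambda>_. 0) \<and> Dop (\<lambda>_. 0) = (\<lambda>_. 0)" by (simp add: sector_zero Dop_zero)
    show "\<And>f. sector 1 f \<and> Dop f = (\<lambda>_. 0) \<Longrightarrow> sector 1 (Pop hA hB f) \<and> Dop (Pop hA hB f) = (\<lambda>_. 0)"
      by (simp add: Pop_sector Dop_Pop Pop_zero)
    show "sector 1 \<psi>0 \<and> Dop \<psi>0 = (\<lambda>_. 0)" using sec0 D0 by simp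
    show "\<psi>0 \<noteq> (\<lambda>_. 0)" by (rule nz0)
  qed
  then obtain \<omega> E0 where \<omega>: "sector 1 \<omega>" "Dop \<omega> = (\<lambda>_. 0)" "\<omega> \<noteq> (\<lambda>_. 0)"
      "heis_ham J \<omega> = (\<lambda>\<eta>. complex_of_real E0 * \<omega> \<eta>)" unfolding HP by blast
  have \<omega>S1: "\<omega> \<in> spin_space S1" unfolding spin_iff S1_def using Dop_zero_spin[OF \<omega>(1,2)] by simp
  have spS1: "spin_space S1 \<noteq> {(\<lambda>_. 0) :: 'v state}" using \<omega>S1 \<omega>(3) by blast
  have SP1ne: "SP S1 \<noteq> {}" unfolding SP_def using \<omega>S1 \<omega>(3,4) by blast
  define \<psi>u :: "'v state" where "\<psi>u = (\<lambda>\<eta>. if \<eta> = (\<lambda>_. True) then 1 else (0::complex))"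
  have secu: "sector CARD('v) \<psi>u" unfolding sector_def \<psi>u_def kc_def by simp
  have Ru: "Rop \<psi>u = (\<lambda>_. 0)" using sector_big[OF Rop_sector[OF secu]] by simp
  have u_sp: "\<psi>u \<in> spin_space Sm"
    unfolding spin_iff
  proof
    fix \<eta> :: "'v \<Rightarrow> bool"
    have r0: "Dop (\<lambda>_. 0) \<eta> = 0" by (simp add: Dop_zero)
    show "casimir \<psi>u \<eta> = complex_of_real (Sm * (Sm + 1)) * \<psi>u \<eta>"
    proof (cases "\<eta> = (\<lambda>_. True)")
      case True
      then have "kc \<eta> = CARD('v)" unfolding kc_def by simp
      then have e: "mv \<eta> ^ 2 + mv \<eta> = Sm * (Sm + 1)" unfolding mv_def Sm_def by (simp add: power2_eq_square algebra_simps)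
      show ?thesis unfolding casimir_DR Ru r0 e by simp
    next
      case False
      then show ?thesis unfolding casimir_DR Ru r0 by (simp add: \<psi>u_def)
    qed
  qed
  have u_nz: "\<psi>u \<noteq> (\<lambda>_. 0)" unfolding \<psi>u_def by (auto simp: fun_eq_iff)
  have Hu: "heis_ham J \<psi>u = (\<lambda>\<eta>. complex_of_real 0 * \<psi>u \<eta>)"
  proof
    fix \<eta> :: "'v \<Rightarrow> bool"
    show "heis_ham J \<psi>u \<eta> = complex_of_real 0 * \<psi>u \<eta>"
    proof (cases "\<eta> = (\<lambda>_. True)")
      case True
      have "hA + (\<Sum>x\<in>UNIV. \<Sum>y\<in>UNIV. hB x y) = 0" unfolding hA_def hB_def by (simp add: sum_negf)
      then show ?thesis unfolding HP True Pop_const_cfg by simp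
    next
      case False
      have "sector CARD('v) (heis_ham J \<psi>u)" unfolding HP by (rule Pop_sector[OF secu])
      moreover have "kc \<eta> \<noteq> CARD('v)" using False kc_all by blast
      ultimately show ?thesis unfolding sector_def by auto
    qed
  qed
  have spSm: "spin_space Sm \<noteq> {(\<lambda>_. 0) :: 'v state}" using u_sp u_nz by blast
  have SPm: "SP Sm = {0}"
  proof
    show "SP Sm \<subseteq> {0}" unfolding SP_def using Gm by blast
    show "{0} \<subseteq> SP Sm" unfolding SP_def using u_sp u_nz Hu by blast
  qed
  have MEm: "min_energy (heis_ham J) Sm = 0" unfolding ME SPm by simp
  define E1 where "E1 = min_energy (heis_ham J) S1"
  have E1in: "E1 \<in> SP S1" unfolding E1_def ME using finSP SP1ne by (rule Min_in)
  have E1pos: "0 < E1"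
    using foel S1nn S1Sm spSm spS1 MEm unfolding FOEL_def E1_def by force
  have E1A: "E1 \<in> A 1"
  proof -
    obtain \<psi> where "\<psi> \<in> spin_space S1" "\<psi> \<noteq> (\<lambda>_. 0)" "heis_ham J \<psi> = (\<lambda>\<eta>. complex_of_real E1 * \<psi> \<eta>)"
      using E1in unfolding SP_def by blast
    then have "Ec J 1 E1" by (rule G)
    then show ?thesis using A_iff E1pos by blast
  qed
  define l1 where "l1 = Min (A 1)"
  have l1A: "l1 \<in> A 1" unfolding l1_def using finA E1A by (intro Min_in) auto
  have l1E1: "l1 \<le> E1" unfolding l1_def using finA E1A by (intro Min_le) auto
  have l1n: "l1 \<in> A n"
  proof -
    have l1pos: "0 < l1" and "Ec J 1 l1" using l1A A_iff by auto
    then obtain \<psi> :: "'v state" where \<psi>: "sector 1 \<psi>" "\<psi> \<noteq> (\<lambda>_. 0)" "heis_ham J \<psi> = (\<lambda>\<eta>. complex_of_real l1 * \<psi> \<eta>)"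
      unfolding Ec_def by blast
    have eP: "Pop hA hB \<psi> = (\<lambda>\<eta>. complex_of_real l1 * \<psi> \<eta>)" using \<psi>(3) unfolding HP .
    have D: "Dop \<psi> = (\<lambda>_. 0)"
    proof (rule ccontr)
      assume ne: "Dop \<psi> \<noteq> (\<lambda>_. 0)"
      have "sector 0 (Dop \<psi>)" using Dop_sector'[of 0 \<psi>] \<psi>(1) by simp
      moreover have "heis_ham J (Dop \<psi>) = (\<lambda>\<eta>. complex_of_real l1 * Dop \<psi> \<eta>)"
        unfolding HP using Dop_iter_eig[OF eP, of 1] by simp
      ultimately have "Ec J 0 l1" unfolding Ec_def using ne by blast
      then have "l1 = 0" using Ec_kill[where J=J, OF J0] by blast
      then show False using l1pos by simp
    qed
    have eC: "casimir \<psi> = (\<lambda>\<eta>. complex_of_real (S1 * (S1 + 1)) * \<psi> \<eta>)"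
      unfolding S1_def using Dop_zero_spin[OF \<psi>(1) D] by simp
    obtain a b where ab: "a \<le> 1" "1 \<le> b" "b \<le> CARD('v)" "a + b = CARD('v)"
      "S1 * (S1 + 1) = (real b - real CARD('v)/2) * (real b - real CARD('v)/2 + 1)"
      "\<forall>j \<le> b - 1. (Rop ^^ j) \<psi> \<noteq> (\<lambda>_. 0)"
      using ladder[OF \<psi>(1,2) eC] by blast
    have "b = CARD('v) - 1" using b_eq[OF ab(4,1,2) N2] ab(5) unfolding S1_def by simp
    then have "n - 1 \<le> b - 1" using nr by arith
    then have nz: "(Rop ^^ (n - 1)) \<psi> \<noteq> (\<lambda>_. 0)" using ab(6) by blast
    have "sector (1 + (n - 1)) ((Rop ^^ (n - 1)) \<psi>)" by (rule Rop_iter_sector[OF \<psi>(1)])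
    then have sec: "sector n ((Rop ^^ (n - 1)) \<psi>)" using nr by simp
    have "heis_ham J ((Rop ^^ (n - 1)) \<psi>) = (\<lambda>\<eta>. complex_of_real l1 * (Rop ^^ (n - 1)) \<psi> \<eta>)"
      unfolding HP by (rule Rop_iter_eig[OF eP])
    then have "Ec J n l1" unfolding Ec_def using sec nz by blast
    then show ?thesis using A_iff l1pos by blast
  qed
  have lower: "l1 \<le> l" if lA: "l \<in> A n" for l
  proof -
    have lpos: "0 < l" and "Ec J n l" using lA A_iff by auto
    then obtain \<psi>0 :: "'v state" where \<psi>0: "sector n \<psi>0" "\<psi>0 \<noteq> (\<lambda>_. 0)" "heis_ham J \<psi>0 = (\<lambda>\<eta>. complex_of_real l * \<psi>0 \<eta>)"
      unfolding Ec_def by blast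
    have "\<exists>\<phi>. (sector n \<phi> \<and> Pop hA hB \<phi> = (\<lambda>\<eta>. complex_of_real l * \<phi> \<eta>)) \<and> \<phi> \<noteq> (\<lambda>_. 0) \<and>
        (\<exists>\<mu>. Pop ca cb \<phi> = (\<lambda>\<eta>. complex_of_real \<mu> * \<phi> \<eta>))"
    proof (rule Pop_exists_eig[where P="\<lambda>\<phi>. sector n \<phi> \<and> Pop hA hB \<phi> = (\<lambda>\<eta>. complex_of_real l * \<phi> \<eta>)"])
      show "\<And>f g. sector n f \<and> Pop hA hB f = (\<lambda>\<eta>. complex_of_real l * f \<eta>) \<Longrightarrow>
          sector n g \<and> Pop hA hB g = (\<lambda>\<eta>. complex_of_real l * g \<eta>) \<Longrightarrow>
          sector n (\<lambda>\<eta>. f \<eta> + g \<eta>) \<and> Pop hA hB (\<lambda>\<eta>. f \<eta> + g \<eta>) = (\<lambda>\<eta>. complex_of_real l * (f \<eta> + g \<eta>))"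
        by (simp add: sector_add Pop_add distrib_left)
      show "\<And>c f. sector n f \<and> Pop hA hB f = (\<lambda>\<eta>. complex_of_real l * f \<eta>) \<Longrightarrow>
          sector n (\<lambda>\<eta>. complex_of_real c * f \<eta>) \<and>
          Pop hA hB (\<lambda>\<eta>. complex_of_real c * f \<eta>) = (\<lambda>\<eta>. complex_of_real l * (complex_of_real c * f \<eta>))"
      proof -
        fix c f assume f: "sector n f \<and> Pop hA hB f = (\<lambda>\<eta>. complex_of_real l * f \<eta>)"
        have "Pop hA hB (\<lambda>\<eta>. complex_of_real c * f \<eta>) = (\<lambda>\<eta>. complex_of_real c * Pop hA hB f \<eta>)"
          by (rule Pop_scale)
        also have "\<dots> = (\<lambda>\<eta>. complex_of_real l * (complex_of_real c * f \<eta>))" using f by (simp add: mult.left_commute)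
        finally show "sector n (\<lambda>\<eta>. complex_of_real c * f \<eta>) \<and>
          Pop hA hB (\<lambda>\<eta>. complex_of_real c * f \<eta>) = (\<lambda>\<eta>. complex_of_real l * (complex_of_real c * f \<eta>))"
          using f sector_scale by blast
      qed
      show "sector n (\<lambda>_. 0) \<and> Pop hA hB (\<lambda>_. 0) = (\<lambda>\<eta>. complex_of_real l * 0)"
        by (simp add: sector_zero Pop_zero)
      show "\<And>f. sector n f \<and> Pop hA hB f = (\<lambda>\<eta>. complex_of_real l * f \<eta>) \<Longrightarrow>
          sector n (Pop ca cb f) \<and> Pop hA hB (Pop ca cb f) = (\<lambda>\<eta>. complex_of_real l * Pop ca cb f \<eta>)"
      proof -
        fix f assume f: "sector n f \<and> Pop hA hB f = (\<lambda>\<eta>. complex_of_real l * f \<eta>)"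
        have "Pop hA hB (Pop ca cb f) = Pop hA hB (casimir f)" unfolding CP ..
        also have "\<dots> = casimir (Pop hA hB f)" by (rule Pop_casimir)
        also have "\<dots> = Pop ca cb (\<lambda>\<eta>. complex_of_real l * f \<eta>)" using f unfolding CP by simp
        also have "\<dots> = (\<lambda>\<eta>. complex_of_real l * Pop ca cb f \<eta>)" by (rule Pop_scale)
        finally show "sector n (Pop ca cb f) \<and> Pop hA hB (Pop ca cb f) = (\<lambda>\<eta>. complex_of_real l * Pop ca cb f \<eta>)"
          using f Pop_sector by blast
      qed
      show "sector n \<psi>0 \<and> Pop hA hB \<psi>0 = (\<lambda>\<eta>. complex_of_real l * \<psi>0 \<eta>)" using \<psi>0 unfolding HP by simp
      show "\<psi>0 \<noteq> (\<lambda>_. 0)" by (rule \<psi>0(2))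
    qed
    then obtain \<phi> \<mu> where \<phi>: "sector n \<phi>" "heis_ham J \<phi> = (\<lambda>\<eta>. complex_of_real l * \<phi> \<eta>)" "\<phi> \<noteq> (\<lambda>_. 0)"
        "casimir \<phi> = (\<lambda>\<eta>. complex_of_real \<mu> * \<phi> \<eta>)" unfolding HP CP by blast
    obtain a b where ab: "a \<le> n" "n \<le> b" "b \<le> CARD('v)" "a + b = CARD('v)"
      "\<mu> = (real b - real CARD('v)/2) * (real b - real CARD('v)/2 + 1)" "Ec J b l" "Ec J a l"
      using ladder_H[where J=J, OF J0 \<phi>(1,3,2,4)] by blast
    have bN: "b \<noteq> CARD('v)"
    proof
      assume "b = CARD('v)"
      then have "l = 0" using Ec_kill[where J=J, OF J0 ab(6)] by simp
      then show False using lpos by simp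
    qed
    show ?thesis
    proof (cases "b = CARD('v) - 1")
      case True
      then have "a = 1" using ab(4) N2 by simp
      then have "l \<in> A 1" using ab(7) A_iff lpos by blast
      then show ?thesis unfolding l1_def using finA by (intro Min_le) auto
    next
      case False
      define S where "S = real b - real CARD('v)/2"
      have Snn: "0 \<le> S" unfolding S_def using ab(1,2,4) by linarith
      have SS1: "S < S1" unfolding S_def S1_def using ab(3) bN False by linarith
      have \<phi>S: "\<phi> \<in> spin_space S" unfolding spin_iff S_def using \<phi>(4) ab(5) by simp
      have spS: "spin_space S \<noteq> {(\<lambda>_. 0) :: 'v state}" using \<phi>S \<phi>(3) by blast
      have "min_energy (heis_ham J) S1 < min_energy (heis_ham J) S"
        using foel Snn SS1 spS1 spS unfolding FOEL_def by blast
      moreover have "min_energy (heis_ham J) S \<le> l"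
        unfolding ME using finSP \<phi>S \<phi>(2,3) unfolding SP_def by (intro Min_le) auto
      ultimately show ?thesis using l1E1 unfolding E1_def by linarith
    qed
  qed
  have "Min (A n) = l1" using finA l1n lower by (intro Min_eqI) auto
  then show "ssep_gap (\<lambda>x y. J x y / 2) n = ssep_gap (\<lambda>x y. J x y / 2) 1"
    using gap unfolding c_def l1_def by simp
qed

end
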